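(* Let $P$ be a countable unital left cancellative semigroup, let $S$ be the inverse semigroup $\{v_{p_1}^*v_{q_1}\cdots v_{p_n}^*v_{q_n}: n\ge1,\ p_i,q_i\in P\}\cup\{0\}$ in $C^*(P)$ with idempotent semilattice $E=\{e_X:X\in\mathcal{J}(P)\}$ and spectrum $\widehat{E}$, and let $$\widehat{E}_\vee=\{\phi\in\widehat{E}: \forall X,Y\in\mathcal{J}(P),\ X\cup Y\in\mathcal{J}(P)\Rightarrow \phi(e_{X\cup Y})=\phi(e_X)+\phi(e_Y)-\phi(e_{X\cap Y})\}.$$ Let $\sigma$ be a representation of $S$ on a Hilbert space $H$. Then $\sigma$ is supported in $\widehat{E}_\vee$ if and only if $\sigma(e_{X\cup Y})=\sigma(e_X)+\sigma(e_Y)-\sigma(e_{X\cap Y})$ for all $X,Y\in\mathcal{J}(P)$ with $X\cup Y\in\mathcal{J}(P)$.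
   Context: For $p\in P$, $pX$ is the image of $X\subseteq P$ under $q\mapsto pq$ and $p^{-1}X=\{q\in P:pq\in X\}$. The constructible right ideals are $\mathcal{J}(P)=\{p_1^{-1}q_1\cdots p_n^{-1}q_nP: n\ge1,\ p_i,q_i\in P\}\cup\{\emptyset\}$. $C^*(P)$ is the universal unital C*-algebra generated by isometries $\{v_p\}_{p\in P}$ and projections $\{e_X\}_{X\in\mathcal{J}(P)}$ with $v_pv_q=v_{pq}$, $v_pe_Xv_p^*=e_{pX}$, $e_\emptyset=0$, $e_P=1$, and $e_Xe_Y=e_{X\cap Y}$. The spectrum $\widehat{E}$ is the set of nonzero maps $\phi:E\to\{0,1\}$ with $\phi(0)=0$ and $\phi(ef)=\phi(e)\phi(f)$, with the pointwise convergence topology; for $e\in E$ let $1_e$ be the characteristic function of $\{\phi:\phi(e)=1\}$ (a continuous function). $\widehat{E}_\vee$ is a closed subset of $\widehat{E}$. A representation of $S$ on $H$ is a map $\sigma:S\to B(H)$ with $\sigma(st)=\sigma(s)\sigma(t)$, $\sigma(s^* )=\sigma(s)^*$ and $\sigma(0)=0$. Such $\sigma$ induces a unique *-representation $\pi_\sigma$ of $C(\widehat{E})$ on $H$ with $\pi_\sigma(1_e)=\sigma(e)$ for $e\in E$. For a closed subset $F\subseteq\widehat{E}$, $\sigma$ is supported in $F$ if $\pi_\sigma(f)=0$ for all $f\in C_0(\widehat{E}\setminus F)$. *)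

theory Defs
  imports "HOL-Analysis.Analysis"
begin

definition left_cancellative :: "('p::monoid_mult) itself \<Rightarrow> bool" where
  "left_cancellative _ \<longleftrightarrow> (\<forall>p q r::'p. p * q = p * r \<longrightarrow> q = r)"

definition lmul :: "'p::monoid_mult \<Rightarrow> 'p set \<Rightarrow> 'p set" where
  "lmul p X = (\<lambda>q. p * q) ` X"

definition linv :: "'p::monoid_mult \<Rightarrow> 'p set \<Rightarrow> 'p set" where
  "linv p X = {q. p * q \<in> X}"

(* the ideal p_1^{-1} q_1 ... p_n^{-1} q_n P, for the word [(p_1,q_1),...,(p_n,q_n)] *)
fun word_ideal :: "('p::monoid_mult \<times> 'p) list \<Rightarrow> 'p set" where
  "word_ideal [] = UNIV"
| "word_ideal ((p, q) # w) = linv p (lmul q (word_ideal w))"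

definition constr_ideals :: "('p::monoid_mult) set set" where
  "constr_ideals = {word_ideal w | w. w \<noteq> []} \<union> {{}}"

(* E = {e_X : X in J(P)} is identified with J(P) via X \<mapsto> e_X (injective, e_\<emptyset> = 0,
   e_X e_Y = e_{X \<inter> Y}).  A character phi : E \<rightarrow> {0,1} is represented as a real valued
   function on sets of P, taking values 0/1 on J(P) and normalised to 0 outside J(P). *)
definition spectrum_E :: "('p::monoid_mult set \<Rightarrow> real) set" where
  "spectrum_E = {\<phi>.
      (\<forall>X\<in>constr_ideals. \<phi> X \<in> {0, 1}) \<and>
      (\<forall>X. X \<notin> constr_ideals \<longrightarrow> \<phi> X = 0) \<and>
      (\<exists>X\<in>constr_ideals. \<phi> X \<noteq> 0) \<and>
      \<phi> {} = 0 \<and>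
      (\<forall>X\<in>constr_ideals. \<forall>Y\<in>constr_ideals. \<phi> (X \<inter> Y) = \<phi> X * \<phi> Y)}"

definition spectrum_E_vee :: "('p::monoid_mult set \<Rightarrow> real) set" where
  "spectrum_E_vee = {\<phi> \<in> spectrum_E.
      \<forall>X\<in>constr_ideals. \<forall>Y\<in>constr_ideals. X \<union> Y \<in> constr_ideals \<longrightarrow>
        \<phi> (X \<union> Y) = \<phi> X + \<phi> Y - \<phi> (X \<inter> Y)}"

(* 1_e for e = e_X : the characteristic function of {phi. phi(e_X) = 1} *)
definition ind_e :: "'p::monoid_mult set \<Rightarrow> ('p set \<Rightarrow> real) \<Rightarrow> complex" where
  "ind_e X = (\<lambda>\<phi>. complex_of_real (\<phi> X))"

(* A complex Hilbert space is modelled as a real Hilbert space 'h together with an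
   orthogonal complex structure J (multiplication by i):
   (a + i b) x = a x + b J x, and the complex inner product is
   <x,y>_C = <x,y> + i <x, J y>  (so the real inner product is its real part). *)
definition complex_structure :: "('h::real_inner \<Rightarrow> 'h) \<Rightarrow> bool" where
  "complex_structure J \<longleftrightarrow> bounded_linear J \<and> (\<forall>x. J (J x) = - x) \<and>
      (\<forall>x y. inner (J x) (J y) = inner x y)"

definition cscale :: "('h::real_vector \<Rightarrow> 'h) \<Rightarrow> complex \<Rightarrow> 'h \<Rightarrow> 'h" where
  "cscale J c x = Re c *\<^sub>R x + Im c *\<^sub>R J x"

definition is_bop :: "('h::real_normed_vector \<Rightarrow> 'h) \<Rightarrow> ('h \<Rightarrow> 'h) \<Rightarrow> bool" where
  "is_bop J T \<longleftrightarrow> bounded_linear T \<and> (\<forall>x. T (J x) = J (T x))"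

(* S = T^* (for complex linear T, S this is equivalent to adjointness for <.,.>_C) *)
definition is_adjoint :: "('h::real_inner \<Rightarrow> 'h) \<Rightarrow> ('h \<Rightarrow> 'h) \<Rightarrow> bool" where
  "is_adjoint T S \<longleftrightarrow> (\<forall>x y. inner (T x) y = inner x (S y))"

(* The restriction of a representation sigma of S on H to E = {e_X : X \<in> J(P)},
   written as a function of X: sigma X = sigma(e_X). *)
definition is_rep_E :: "('h::{real_inner,complete_space} \<Rightarrow> 'h) \<Rightarrow>
    ('p::monoid_mult set \<Rightarrow> 'h \<Rightarrow> 'h) \<Rightarrow> bool" where
  "is_rep_E J \<sigma> \<longleftrightarrow>
     (\<forall>X\<in>constr_ideals. is_bop J (\<sigma> X)) \<and>
     (\<forall>X\<in>constr_ideals. \<forall>Y\<in>constr_ideals. \<sigma> (X \<inter> Y) = \<sigma> X \<circ> \<sigma> Y) \<and>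
     (\<forall>X\<in>constr_ideals. is_adjoint (\<sigma> X) (\<sigma> X)) \<and>
     \<sigma> {} = (\<lambda>x. 0)"

(* *-representation of C(\<widehat>E) on H (elements of C(\<widehat>E) are the functions continuous
   on spectrum_E; pi only depends on their restriction to spectrum_E). *)
definition is_star_rep :: "('h::{real_inner,complete_space} \<Rightarrow> 'h) \<Rightarrow>
    ((('p::monoid_mult set \<Rightarrow> real) \<Rightarrow> complex) \<Rightarrow> 'h \<Rightarrow> 'h) \<Rightarrow> bool" where
  "is_star_rep J \<pi> \<longleftrightarrow>
     (\<forall>f. continuous_on spectrum_E f \<longrightarrow> is_bop J (\<pi> f)) \<and>
     (\<forall>f g. continuous_on spectrum_E f \<longrightarrow> continuous_on spectrum_E g \<longrightarrow>
        (\<forall>\<phi>\<in>spectrum_E. f \<phi> = g \<phi>) \<longrightarrow> \<pi> f = \<pi> g) \<and>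
     (\<forall>f g. continuous_on spectrum_E f \<longrightarrow> continuous_on spectrum_E g \<longrightarrow>
        \<pi> (\<lambda>\<phi>. f \<phi> + g \<phi>) = (\<lambda>x. \<pi> f x + \<pi> g x)) \<and>
     (\<forall>f c. continuous_on spectrum_E f \<longrightarrow>
        \<pi> (\<lambda>\<phi>. c * f \<phi>) = (\<lambda>x. cscale J c (\<pi> f x))) \<and>
     (\<forall>f g. continuous_on spectrum_E f \<longrightarrow> continuous_on spectrum_E g \<longrightarrow>
        \<pi> (\<lambda>\<phi>. f \<phi> * g \<phi>) = \<pi> f \<circ> \<pi> g) \<and>
     (\<forall>f. continuous_on spectrum_E f \<longrightarrow> is_adjoint (\<pi> f) (\<pi> (\<lambda>\<phi>. cnj (f \<phi>))))"

(* sigma is supported in F: pi_sigma(f) = 0 for all f \<in> C_0(\<widehat>E \ F), i.e. all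
   f \<in> C(\<widehat>E) vanishing on F.  pi_sigma is the unique *-representation with
   pi_sigma(1_e) = sigma(e); we quantify over all such pi. *)
definition supported_in :: "('h::{real_inner,complete_space} \<Rightarrow> 'h) \<Rightarrow>
    ('p::monoid_mult set \<Rightarrow> 'h \<Rightarrow> 'h) \<Rightarrow> ('p set \<Rightarrow> real) set \<Rightarrow> bool" where
  "supported_in J \<sigma> F \<longleftrightarrow>
     (\<forall>\<pi>. is_star_rep J \<pi> \<and> (\<forall>X\<in>constr_ideals. \<pi> (ind_e X) = \<sigma> X) \<longrightarrow>
        (\<forall>f. continuous_on spectrum_E f \<and> (\<forall>\<phi>\<in>F. f \<phi> = 0) \<longrightarrow> \<pi> f = (\<lambda>x. 0)))"

end

theory Submission
  imports Defs
begin

lemma UNIV_constr: "(UNIV::'p::monoid_mult set) \<in> constr_ideals"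
proof -
  have "word_ideal [(1::'p,1)] = UNIV" by (auto simp: linv_def lmul_def)
  then show ?thesis unfolding constr_ideals_def by (metis (mono_tags, lifting) UnCI list.distinct(1) mem_Collect_eq)
qed

lemma empty_constr: "{} \<in> constr_ideals" by (simp add: constr_ideals_def)

lemma constr_step: "V \<in> constr_ideals \<Longrightarrow> linv p (lmul q V) \<in> constr_ideals"
proof -
  assume "V \<in> constr_ideals"
  then consider "V = {}" | v where "v \<noteq> []" "V = word_ideal v" unfolding constr_ideals_def by blast
  then show ?thesis
  proof cases
    case 1 then show ?thesis by (simp add: linv_def lmul_def empty_constr)
  next
    case 2
    then have "linv p (lmul q V) = word_ideal ((p,q)#v)" by simp
    then show ?thesis unfolding constr_ideals_def by blast
  qed
qed

lemma word_inter:
  assumes lc: "left_cancellative TYPE('p::monoid_mult)"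
  shows "Y \<in> constr_ideals \<Longrightarrow> word_ideal (w::('p\<times>'p) list) \<inter> Y \<in> constr_ideals"
proof (induction w arbitrary: Y)
  case Nil then show ?case by simp
next
  case (Cons a w)
  obtain p q where a: "a = (p,q)" by (cases a)
  have eq: "word_ideal (a#w) \<inter> Y = linv p (lmul q (word_ideal w \<inter> linv q (lmul p Y)))"
  proof (rule set_eqI)
    fix x
    show "x \<in> word_ideal (a#w) \<inter> Y \<longleftrightarrow> x \<in> linv p (lmul q (word_ideal w \<inter> linv q (lmul p Y)))"
    proof
      assume "x \<in> word_ideal (a#w) \<inter> Y"
      then obtain z where "z \<in> word_ideal w" "p * x = q * z" "x \<in> Y" by (auto simp: a linv_def lmul_def)
      then have "q * z \<in> (\<lambda>r. p * r) ` Y" by (metis image_eqI)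
      with \<open>z \<in> word_ideal w\<close> \<open>p * x = q * z\<close>
      have "p * x \<in> (\<lambda>r. q * r) ` (word_ideal w \<inter> {r. q * r \<in> (\<lambda>r. p * r) ` Y})"
        by (intro image_eqI[where x=z]) auto
      then show "x \<in> linv p (lmul q (word_ideal w \<inter> linv q (lmul p Y)))"
        unfolding linv_def lmul_def by simp
    next
      assume "x \<in> linv p (lmul q (word_ideal w \<inter> linv q (lmul p Y)))"
      then obtain z y where "z \<in> word_ideal w" "p * x = q * z" "q * z = p * y" "y \<in> Y"
        by (auto simp: linv_def lmul_def)
      moreover then have "x = y" using lc unfolding left_cancellative_def by metis
      ultimately show "x \<in> word_ideal (a#w) \<inter> Y" unfolding a by (simp add: linv_def lmul_def) (metis image_eqI)
    qed
  qed
  have "linv q (lmul p Y) \<in> constr_ideals" using Cons.prems constr_step by blast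
  then have "word_ideal w \<inter> linv q (lmul p Y) \<in> constr_ideals" using Cons.IH by blast
  then show ?case unfolding eq by (rule constr_step)
qed

lemma constr_inter:
  assumes lc: "left_cancellative TYPE('p::monoid_mult)"
  and "X \<in> constr_ideals" "(Y::'p set) \<in> constr_ideals"
  shows "X \<inter> Y \<in> constr_ideals"
proof -
  from assms(2) consider "X = {}" | w where "X = word_ideal w" unfolding constr_ideals_def by blast
  then show ?thesis
    by cases (auto simp: empty_constr word_inter[OF lc assms(3)])
qed

lemma countable_constr:
  assumes "countable (UNIV::'p::monoid_mult set)"
  shows "countable (constr_ideals :: 'p set set)"
proof -
  have "countable (UNIV :: ('p\<times>'p) set)" using assms by (metis UNIV_Times_UNIV countable_SIGMA)
  then have "countable (lists (UNIV :: ('p\<times>'p) set))" by blast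
  then have "countable (word_ideal ` lists (UNIV :: ('p\<times>'p) set))" by blast
  moreover have "constr_ideals \<subseteq> insert {} (word_ideal ` lists (UNIV :: ('p\<times>'p) set))"
    unfolding constr_ideals_def by auto
  ultimately show ?thesis by (meson countable_insert countable_subset)
qed

definition L :: "nat \<Rightarrow> bool list set" where "L n = {xs. length xs = n}"

lemma finite_L[simp]: "finite (L n)"
  unfolding L_def using finite_lists_length_eq[of "UNIV::bool set" n] by simp

lemma L_Suc: "L (Suc n) = Cons True ` L n \<union> Cons False ` L n"
  unfolding L_def by (auto simp: length_Suc_conv)

lemma sumL_Suc: "(\<Sum>xs\<in>L (Suc n). g xs) = (\<Sum>xs\<in>L n. g (True#xs) + g (False#xs))"
proof -
  have "(\<Sum>xs\<in>L (Suc n). g xs) = (\<Sum>xs\<in>Cons True ` L n. g xs) + (\<Sum>xs\<in>Cons False ` L n. g xs)"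
    unfolding L_Suc by (rule sum.union_disjoint) auto
  also have "\<dots> = (\<Sum>xs\<in>L n. g (True#xs)) + (\<Sum>xs\<in>L n. g (False#xs))"
    by (simp add: sum.reindex)
  finally show ?thesis by (simp add: sum.distrib)
qed

lemma sumL_append: "(\<Sum>ys\<in>L (k+n). g ys) = (\<Sum>zs\<in>L k. \<Sum>xs\<in>L n. g (zs@xs))"
proof (induction k arbitrary: g)
  case 0
  have "L 0 = {[]}" unfolding L_def by auto
  then show ?case by simp
next
  case (Suc k)
  have "(\<Sum>ys\<in>L (Suc k+n). g ys) = (\<Sum>ys\<in>L (k+n). g (True#ys) + g (False#ys))"
    using sumL_Suc[where n="k+n" and g=g] by simp
  also have "\<dots> = (\<Sum>zs\<in>L k. \<Sum>xs\<in>L n. g (True#zs@xs) + g (False#zs@xs))"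
    using Suc.IH[of "\<lambda>ys. g (True#ys) + g (False#ys)"] by simp
  also have "\<dots> = (\<Sum>zs\<in>L (Suc k). \<Sum>xs\<in>L n. g (zs@xs))"
    unfolding sumL_Suc by (simp add: sum.distrib)
  finally show ?case .
qed

locale ctx =
  fixes J :: "'h::{real_inner,complete_space} \<Rightarrow> 'h"
    and \<sigma> :: "'p::monoid_mult set \<Rightarrow> 'h \<Rightarrow> 'h"
  assumes cnt: "countable (UNIV :: 'p set)"
    and lc: "left_cancellative TYPE('p)"
    and cs: "complex_structure J"
    and rep: "is_rep_E J \<sigma>"
begin

abbreviation "C \<equiv> (constr_ideals :: 'p set set)"
abbreviation "U \<equiv> (UNIV :: 'p set)"

lemma UC[simp]: "U \<in> C" by (rule UNIV_constr)
lemma EC[simp]: "{} \<in> C" by (rule empty_constr)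
lemma IC[simp]: "X \<in> C \<Longrightarrow> Y \<in> C \<Longrightarrow> X \<inter> Y \<in> C" using constr_inter[OF lc] by blast

lemma bl: "X \<in> C \<Longrightarrow> bounded_linear (\<sigma> X)"
  using rep unfolding is_rep_E_def is_bop_def by simp
lemma sJ: "X \<in> C \<Longrightarrow> \<sigma> X (J x) = J (\<sigma> X x)"
  using rep unfolding is_rep_E_def is_bop_def by blast
lemma scomp: "X \<in> C \<Longrightarrow> Y \<in> C \<Longrightarrow> \<sigma> X (\<sigma> Y x) = \<sigma> (X \<inter> Y) x"
  using rep unfolding is_rep_E_def by (metis comp_apply)
lemma sadj: "X \<in> C \<Longrightarrow> inner (\<sigma> X x) y = inner x (\<sigma> X y)"
  using rep unfolding is_rep_E_def is_adjoint_def by blast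
lemma sempty: "\<sigma> {} x = 0"
  using rep unfolding is_rep_E_def by simp

lemma s_add: assumes "X \<in> C" shows "\<sigma> X (a + b) = \<sigma> X a + \<sigma> X b" using linear_add[OF bounded_linear.linear[OF bl[OF assms]]] by simp
lemma s_diff: assumes "X \<in> C" shows "\<sigma> X (a - b) = \<sigma> X a - \<sigma> X b" using linear_diff[OF bounded_linear.linear[OF bl[OF assms]]] by simp
lemma s_zero: assumes "X \<in> C" shows "\<sigma> X 0 = 0" using linear_0[OF bounded_linear.linear[OF bl[OF assms]]] by simp
lemma s_scale: assumes "X \<in> C" shows "\<sigma> X (r *\<^sub>R a) = r *\<^sub>R \<sigma> X a" using linear_scale[OF bounded_linear.linear[OF bl[OF assms]]] by simp
lemma s_sum: assumes "X \<in> C" shows "\<sigma> X (sum g A) = (\<Sum>a\<in>A. \<sigma> X (g a))" using linear_sum[OF bounded_linear.linear[OF bl[OF assms]]] by simp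

lemma JJ: "J (J x) = - x" using cs unfolding complex_structure_def by blast
lemma Jbl: "bounded_linear J" using cs unfolding complex_structure_def by blast
lemma Jinner: "inner (J x) (J y) = inner x y" using cs unfolding complex_structure_def by blast
lemma J_add: "J (a + b) = J a + J b" using linear_add[OF bounded_linear.linear[OF Jbl]] by simp
lemma J_diff: "J (a - b) = J a - J b" using linear_diff[OF bounded_linear.linear[OF Jbl]] by simp
lemma J_zero: "J 0 = 0" using linear_0[OF bounded_linear.linear[OF Jbl]] by simp
lemma J_scale: "J (r *\<^sub>R a) = r *\<^sub>R J a" using linear_scale[OF bounded_linear.linear[OF Jbl]] by simp
lemma J_sum: "J (sum g A) = (\<Sum>a\<in>A. J (g a))" using linear_sum[OF bounded_linear.linear[OF Jbl]] by simp
lemma J_inner_swap: "inner (J x) y = - inner x (J y)"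
  using Jinner[of "J x" y] by (simp add: JJ)
lemma J_inner_self: "inner x (J x) = 0"
  using J_inner_swap[of x x] by (simp add: inner_commute)
lemma J_norm: "norm (J x) = norm x"
  using Jinner[of x x] by (simp add: norm_eq_sqrt_inner)

definition Z :: "nat \<Rightarrow> 'p set" where "Z = from_nat_into C"

lemma ZC[simp]: "Z i \<in> C"
proof -
  have "C \<noteq> {}" using EC by blast
  then show ?thesis unfolding Z_def by (rule from_nat_into)
qed
lemma Z_surj: "X \<in> C \<Longrightarrow> \<exists>i. Z i = X"
  unfolding Z_def using from_nat_into_surj[OF countable_constr[OF cnt]] by simp

definition F :: "bool \<Rightarrow> 'p set \<Rightarrow> 'h \<Rightarrow> 'h" where
  "F b W x = (if b then \<sigma> W x else \<sigma> U x - \<sigma> W x)"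

fun Q :: "bool list \<Rightarrow> 'h \<Rightarrow> 'h" where
  "Q [] x = \<sigma> U x"
| "Q (b#xs) x = F b (Z (length xs)) (Q xs x)"

lemma F_bl: "W \<in> C \<Longrightarrow> bounded_linear (F b W)"
  unfolding F_def[abs_def] using bl[of W] bl[of U]
  by (cases b) (auto intro: bounded_linear_sub)

lemma Q_bl: "bounded_linear (Q xs)"
proof (induction xs)
  case Nil
  have "Q [] = \<sigma> U" by (rule ext) simp
  then show ?case using bl[of U] by simp
next
  case (Cons b xs)
  have "Q (b#xs) = F b (Z (length xs)) \<circ> Q xs" by (simp add: fun_eq_iff)
  then show ?case using bounded_linear_compose[OF F_bl[of "Z (length xs)" b] Cons.IH]
    by (simp add: o_def)
qed

lemma Q_add: "Q xs (a + b) = Q xs a + Q xs b" using linear_add[OF bounded_linear.linear[OF Q_bl]] by simp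
lemma Q_diff: "Q xs (a - b) = Q xs a - Q xs b" using linear_diff[OF bounded_linear.linear[OF Q_bl]] by simp
lemma Q_zero: "Q xs 0 = 0" using linear_0[OF bounded_linear.linear[OF Q_bl]] by simp
lemma Q_scale: "Q xs (r *\<^sub>R a) = r *\<^sub>R Q xs a" using linear_scale[OF bounded_linear.linear[OF Q_bl]] by simp
lemma Q_sum: "Q xs (sum g A) = (\<Sum>a\<in>A. Q xs (g a))" using linear_sum[OF bounded_linear.linear[OF Q_bl]] by simp

lemma F_comm: "A \<in> C \<Longrightarrow> B \<in> C \<Longrightarrow> F b A (F c B y) = F c B (F b A y)"
  unfolding F_def by (auto simp: s_diff scomp Int_commute)

lemma F_idem: "A \<in> C \<Longrightarrow> F b A (F b A y) = F b A y"
  unfolding F_def by (auto simp: s_diff scomp Int_commute)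

lemma F_U: "A \<in> C \<Longrightarrow> F b A (\<sigma> U y) = F b A y"
  unfolding F_def by (auto simp: s_diff scomp Int_commute)

lemma U_F: "A \<in> C \<Longrightarrow> \<sigma> U (F b A y) = F b A y"
  unfolding F_def by (auto simp: s_diff scomp Int_commute)

lemma F_orth: "A \<in> C \<Longrightarrow> b \<noteq> c \<Longrightarrow> F b A (F c A y) = 0"
  unfolding F_def by (auto simp: s_diff scomp Int_commute)

lemma U_Q: "\<sigma> U (Q xs x) = Q xs x"
  by (cases xs) (auto simp: scomp U_F)

lemma F_Q: "A \<in> C \<Longrightarrow> F b A (Q xs x) = Q xs (F b A x)"
  by (induction xs) (auto simp: F_comm F_U U_F)

lemma F_J: "A \<in> C \<Longrightarrow> F b A (J x) = J (F b A x)"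
  unfolding F_def by (auto simp: sJ J_diff)

lemma Q_J: "Q xs (J x) = J (Q xs x)"
  by (induction xs) (auto simp: sJ F_J)

lemma F_adj: "A \<in> C \<Longrightarrow> inner (F b A x) y = inner x (F b A y)"
  unfolding F_def by (auto simp: sadj s_diff inner_diff_left inner_diff_right)

lemma Q_adj: "inner (Q xs x) y = inner x (Q xs y)"
  by (induction xs arbitrary: x y) (auto simp: sadj F_adj F_Q)

lemma Q_factor: "i < length xs \<Longrightarrow> F (rev xs ! i) (Z i) (Q xs x) = Q xs x"
proof (induction xs arbitrary: x)
  case Nil then show ?case by simp
next
  case (Cons b xs)
  show ?case
  proof (cases "i = length xs")
    case True
    then show ?thesis by (simp add: nth_append F_idem)
  next
    case False
    then have "i < length xs" using Cons.prems by simp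
    then show ?thesis using Cons.IH
      by (simp add: nth_append F_comm[of "Z i" "Z (length xs)"])
  qed
qed

lemma Q_idem: "Q xs (Q xs x) = Q xs x"
  by (induction xs arbitrary: x) (auto simp: scomp F_Q F_idem)

lemma Q_orth: "length xs = length ys \<Longrightarrow> xs \<noteq> ys \<Longrightarrow> Q xs (Q ys x) = 0"
proof (induction xs arbitrary: ys x)
  case Nil then show ?case by simp
next
  case (Cons b xs)
  then obtain c ys' where ys: "ys = c # ys'" "length ys' = length xs" by (cases ys) auto
  have "Q (b#xs) (Q ys x) = F b (Z (length xs)) (F c (Z (length xs)) (Q xs (Q ys' x)))"
    using ys by (simp add: F_Q)
  also have "\<dots> = 0"
  proof (cases "b = c")
    case True
    then have "xs \<noteq> ys'" using Cons.prems ys by auto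
    then have "Q xs (Q ys' x) = 0" using Cons.IH ys by simp
    then show ?thesis using F_bl[of "Z (length xs)"] by (simp add: linear_simps)
  next
    case False then show ?thesis by (simp add: F_orth F_Q[symmetric] F_comm)
  qed
  finally show ?case .
qed

lemma Q_split: "Q (True#xs) x + Q (False#xs) x = Q xs x"
  by (simp add: F_def U_Q)

lemma Q_sum_L: "(\<Sum>xs\<in>L n. Q xs x) = \<sigma> U x"
proof (induction n)
  case 0
  have "L 0 = {[]}" unfolding L_def by auto
  then show ?case by simp
next
  case (Suc n)
  then show ?case by (simp only: sumL_Suc Q_split)
qed

lemma Q_refine: "(\<Sum>zs\<in>L k. Q (zs@xs) x) = Q xs x"
proof (induction k)
  case 0
  have "L 0 = {[]}" unfolding L_def by auto
  then show ?case by simp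
next
  case (Suc k)
  then show ?case by (simp only: sumL_Suc append_Cons Q_split)
qed

end

context ctx begin

definition match :: "('p set \<Rightarrow> real) \<Rightarrow> bool list \<Rightarrow> bool" where
  "match \<phi> xs \<longleftrightarrow> (\<forall>i<length xs. \<phi> (Z i) = (if rev xs ! i then 1 else 0))"

definition UR :: bool where
  "UR \<longleftrightarrow> (\<forall>X\<in>C. \<forall>Y\<in>C. X \<union> Y \<in> C \<longrightarrow>
       \<sigma> (X \<union> Y) = (\<lambda>x. \<sigma> X x + \<sigma> Y x - \<sigma> (X \<inter> Y) x))"

lemma F_zero: "W \<in> C \<Longrightarrow> F b W 0 = 0"
  unfolding F_def by (simp add: s_zero)

lemma FF0_X: assumes "X \<in> C" "Y \<in> C" shows "F False X (F True (X \<inter> Y) y) = 0"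
proof -
  have "\<sigma> U (\<sigma> (X \<inter> Y) y) = \<sigma> (X \<inter> Y) y" using scomp[OF UC IC[OF assms]] by simp
  moreover have "\<sigma> X (\<sigma> (X \<inter> Y) y) = \<sigma> (X \<inter> Y) y" using scomp[OF assms(1) IC[OF assms]]
    by (simp add: Int_absorb1)
  ultimately show ?thesis unfolding F_def by simp
qed

lemma FF0_Y: assumes "X \<in> C" "Y \<in> C" shows "F False Y (F True (X \<inter> Y) y) = 0"
  using FF0_X[OF assms(2,1)] by (simp add: Int_commute)

lemma FFF0: assumes "X \<in> C" "Y \<in> C" shows "F True X (F True Y (F False (X \<inter> Y) y)) = 0"
proof -
  have "F True X (F True Y (F False (X \<inter> Y) y)) = \<sigma> (X \<inter> Y) (\<sigma> U y - \<sigma> (X \<inter> Y) y)"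
    using scomp[OF assms] by (simp add: F_def)
  also have "\<dots> = 0" using scomp[OF IC[OF assms] UC] scomp[OF IC[OF assms] IC[OF assms]]
    by (simp add: s_diff[OF IC[OF assms]])
  finally show ?thesis .
qed

lemma ext_char:
  assumes nz0: "Q xs x0 \<noteq> 0"
  shows "\<exists>\<phi>\<in>spectrum_E. match \<phi> xs \<and> (UR \<longrightarrow> \<phi> \<in> spectrum_E_vee)"
proof -
  define nz where "nz ys \<longleftrightarrow> (\<exists>x. Q ys x \<noteq> 0)" for ys
  define nxt where "nxt ys = (if nz (True#ys) then True#ys else False#ys)" for ys
  define e where "e k = (nxt ^^ k) xs" for k
  have e_Suc: "e (Suc k) = nxt (e k)" for k unfolding e_def by simp
  have nz_e: "nz (e k)" for k
  proof (induction k)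
    case 0 then show ?case using nz0 unfolding nz_def e_def by auto
  next
    case (Suc k)
    show ?case
    proof (cases "nz (True # e k)")
      case True then show ?thesis by (simp add: e_Suc nxt_def)
    next
      case False
      then have "Q (True # e k) x = 0" for x unfolding nz_def by auto
      then have "Q (False # e k) x = Q (e k) x" for x using Q_split[of "e k" x] by simp
      moreover have "nxt (e k) = False # e k" using False by (simp add: nxt_def)
      ultimately show ?thesis using Suc unfolding nz_def by (simp add: e_Suc)
    qed
  qed
  have len_e: "length (e k) = k + length xs" for k
    by (induction k) (auto simp: e_Suc nxt_def e_def)
  have suf: "\<exists>zs. e (j + k) = zs @ e k" for j k
  proof (induction j)
    case 0 then show ?case by simp
  next
    case (Suc j)
    then obtain zs where "e (j + k) = zs @ e k" by blast
    then show ?case by (auto simp: e_Suc nxt_def)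
  qed
  have rev_app: "i < length ys \<Longrightarrow> rev (zs @ ys) ! i = rev ys ! i" for zs ys :: "bool list" and i
    by (simp add: nth_append)
  define bit where "bit i = rev (e (Suc i)) ! i" for i
  have bit_e: "rev (e k) ! i = bit i" if "i < length (e k)" for i k
  proof -
    obtain zs1 where z1: "e ((max k (Suc i) - k) + k) = zs1 @ e k" using suf by blast
    obtain zs2 where z2: "e ((max k (Suc i) - Suc i) + Suc i) = zs2 @ e (Suc i)" using suf by blast
    have "(max k (Suc i) - k) + k = (max k (Suc i) - Suc i) + Suc i" by simp
    then have "zs1 @ e k = zs2 @ e (Suc i)" using z1 z2 by simp
    moreover have "i < length (e (Suc i))" using len_e by simp
    ultimately show ?thesis unfolding bit_def using that rev_app by metis
  qed
  have fac: "F (bit i) (Z i) (Q (e k) x) = Q (e k) x" if "i < length (e k)" for i k x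
    using Q_factor[OF that] bit_e[OF that] by simp
  have big: "i < length (e (Suc m))" if "i \<le> m" for i m using len_e[of "Suc m"] that by simp
  have contra: False if "\<And>x. Q (e k) x = 0" for k
    using nz_e[of k] that unfolding nz_def by simp
  have consist: "bit i = bit j" if "Z i = Z j" for i j
  proof (rule ccontr)
    assume ne: "bit i \<noteq> bit j"
    define k where "k = Suc (i + j)"
    have "Q (e k) x = 0" for x
    proof -
      have "Q (e k) x = F (bit i) (Z i) (F (bit j) (Z j) (Q (e k) x))"
        using fac[of i k] fac[of j k] big[of i "i+j"] big[of j "i+j"] unfolding k_def by simp
      also have "\<dots> = 0" using F_orth[of "Z i" "bit i" "bit j"] ne that by simp
      finally show ?thesis .
    qed
    then show False using contra by blast
  qed
  define \<phi> where "\<phi> W = (if W \<in> C then (if bit (LEAST i. Z i = W) then 1 else 0) else (0::real))" for W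
  have \<phi>Z: "\<phi> (Z i) = (if bit i then 1 else 0)" for i
  proof -
    have "Z (LEAST l. Z l = Z i) = Z i" by (rule LeastI) simp
    then have "bit (LEAST l. Z l = Z i) = bit i" using consist by blast
    then show ?thesis unfolding \<phi>_def by simp
  qed
  have idx: "\<exists>i. Z i = W" if "W \<in> C" for W using Z_surj that by blast
  have match: "match \<phi> xs"
    unfolding match_def
  proof (intro allI impI)
    fix i assume "i < length xs"
    then have "i < length (e 0)" by (simp add: e_def)
    then have "rev xs ! i = bit i" using bit_e[of i 0] by (simp add: e_def)
    then show "\<phi> (Z i) = (if rev xs ! i then 1 else 0)" by (simp add: \<phi>Z)
  qed
  have mult: "\<phi> (X \<inter> Y) = \<phi> X * \<phi> Y" if XC: "X \<in> C" and YC: "Y \<in> C" for X Y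
  proof -
    obtain a where a: "Z a = X" using idx XC by blast
    obtain b where b: "Z b = Y" using idx YC by blast
    obtain c where c: "Z c = X \<inter> Y" using idx[OF IC[OF XC YC]] by blast
    define k where "k = Suc (a + b + c)"
    have ka: "a < length (e k)" and kb: "b < length (e k)" and kc: "c < length (e k)"
      unfolding k_def using big[of a "a+b+c"] big[of b "a+b+c"] big[of c "a+b+c"] by auto
    have E: "Q (e k) x = F (bit a) X (F (bit b) Y (F (bit c) (X \<inter> Y) (Q (e k) x)))" for x
    proof -
      have "Q (e k) x = F (bit a) (Z a) (F (bit b) (Z b) (F (bit c) (Z c) (Q (e k) x)))"
        by (simp only: fac[OF ka] fac[OF kb] fac[OF kc])
      then show ?thesis by (simp only: a b c)
    qed
    have "bit c = (bit a \<and> bit b)"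
    proof (rule ccontr)
      assume ne: "bit c \<noteq> (bit a \<and> bit b)"
      have "Q (e k) x = 0" for x
      proof -
        let ?q = "Q (e k) x"
        have "?q = F (bit a) X (F (bit b) Y (F (bit c) (X \<inter> Y) ?q))" by (rule E)
        also have "\<dots> = 0"
        proof -
          consider "bit c" "\<not> bit a" | "bit c" "\<not> bit b" | "\<not> bit c" "bit a" "bit b" using ne by blast
          then show ?thesis
          proof cases
            case 1
            then show ?thesis using FF0_X[OF XC YC] F_zero[OF YC]
              by (simp add: F_comm[OF XC YC, of False])
          next
            case 2
            then show ?thesis using FF0_Y[OF XC YC] F_zero[OF XC] by simp
          next
            case 3
            then show ?thesis using FFF0[OF XC YC] by simp
          qed
        qed
        finally show ?thesis .
      qed
      then show False using contra by blast
    qed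
    then show ?thesis using \<phi>Z[of a] \<phi>Z[of b] \<phi>Z[of c] a b c by auto
  qed
  have spec: "\<phi> \<in> spectrum_E"
  proof -
    have "\<phi> U = 1"
    proof -
      obtain u where u: "Z u = U" using idx[OF UC] by blast
      have "bit u"
      proof (rule ccontr)
        assume nb: "\<not> bit u"
        have "Q (e (Suc u)) x = 0" for x
        proof -
          have "Q (e (Suc u)) x = F (bit u) (Z u) (Q (e (Suc u)) x)" using fac big by simp
          also have "\<dots> = 0" using nb u by (simp add: F_def)
          finally show ?thesis .
        qed
        then show False using contra by blast
      qed
      then show ?thesis using \<phi>Z u by metis
    qed
    moreover have "\<phi> {} = 0"
    proof -
      obtain u where u: "Z u = {}" using idx[OF EC] by blast
      have "\<not> bit u"
      proof
        assume nb: "bit u"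
        have "Q (e (Suc u)) x = 0" for x
        proof -
          have "Q (e (Suc u)) x = F (bit u) (Z u) (Q (e (Suc u)) x)" using fac big by simp
          also have "\<dots> = 0" using nb u by (simp add: F_def sempty)
          finally show ?thesis .
        qed
        then show False using contra by blast
      qed
      then show ?thesis using \<phi>Z u by metis
    qed
    moreover have "\<forall>X\<in>C. \<phi> X \<in> {0, 1}" unfolding \<phi>_def by auto
    moreover have "\<forall>X. X \<notin> C \<longrightarrow> \<phi> X = 0" unfolding \<phi>_def by auto
    ultimately show ?thesis unfolding spectrum_E_def
    proof (intro CollectI conjI)
      show "\<exists>X\<in>C. \<phi> X \<noteq> 0" using \<open>\<phi> U = 1\<close> UC by (intro bexI[of _ U]) auto
      show "\<forall>X\<in>C. \<forall>Y\<in>C. \<phi> (X \<inter> Y) = \<phi> X * \<phi> Y" using mult by blast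
    qed
  qed
  have vee: "\<phi> \<in> spectrum_E_vee" if ur: UR
  proof -
    have "\<phi> (X \<union> Y) = \<phi> X + \<phi> Y - \<phi> (X \<inter> Y)"
      if XC: "X \<in> C" and YC: "Y \<in> C" and XYC: "X \<union> Y \<in> C" for X Y
    proof -
      have m1: "\<phi> X = \<phi> X * \<phi> (X \<union> Y)" using mult[OF XC XYC] by (simp add: Int_absorb2)
      have m2: "\<phi> Y = \<phi> Y * \<phi> (X \<union> Y)" using mult[OF YC XYC] by (simp add: Int_absorb2)
      have m3: "\<phi> (X \<inter> Y) = \<phi> X * \<phi> Y" using mult[OF XC YC] .
      have v: "\<phi> W = 0 \<or> \<phi> W = 1" for W unfolding \<phi>_def by auto
      have "\<not> (\<phi> (X \<union> Y) = 1 \<and> \<phi> X = 0 \<and> \<phi> Y = 0)"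
      proof
        assume h: "\<phi> (X \<union> Y) = 1 \<and> \<phi> X = 0 \<and> \<phi> Y = 0"
        obtain a where a: "Z a = X \<union> Y" using idx XYC by blast
        obtain b where b: "Z b = X" using idx XC by blast
        obtain c where c: "Z c = Y" using idx YC by blast
        have ba: "bit a" "\<not> bit b" "\<not> bit c" using h \<phi>Z[of a] \<phi>Z[of b] \<phi>Z[of c] a b c
          by (auto split: if_splits)
        define k where "k = Suc (a + b + c)"
        have ka: "a < length (e k)" and kb: "b < length (e k)" and kc: "c < length (e k)"
          unfolding k_def using big[of a "a+b+c"] big[of b "a+b+c"] big[of c "a+b+c"] by auto
        have "Q (e k) x = 0" for x
        proof -
          let ?q = "Q (e k) x"
          have xyset: "X \<inter> Y \<inter> (X \<union> Y) = X \<inter> Y" by blast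
          have "?q = F (bit a) (Z a) (F (bit b) (Z b) (F (bit c) (Z c) ?q))"
            by (simp only: fac[OF ka] fac[OF kb] fac[OF kc])
          also have "\<dots> = F (bit a) (X \<union> Y) (F (bit b) X (F (bit c) Y ?q))"
            by (simp only: a b c)
          also have "\<dots> = \<sigma> (X \<union> Y) (\<sigma> U (\<sigma> U ?q - \<sigma> Y ?q) - \<sigma> X (\<sigma> U ?q - \<sigma> Y ?q))"
            using ba by (simp add: F_def)
          also have "\<dots> = \<sigma> (X \<union> Y) ?q - \<sigma> Y ?q - \<sigma> X ?q + \<sigma> (X \<inter> Y) ?q"
            using XC YC XYC by (simp add: s_diff scomp Int_absorb2 Int_commute Int_left_commute
               xyset)
          also have "\<dots> = 0" using ur XC YC XYC unfolding UR_def by simp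
          finally show ?thesis .
        qed
        then show False using contra by blast
      qed
      then show ?thesis using m1 m2 m3 v[of X] v[of Y] v[of "X \<union> Y"] by auto
    qed
    then show ?thesis using spec unfolding spectrum_E_vee_def by blast
  qed
  show ?thesis using spec match vee by blast
qed

end

context ctx begin

lemma sp_U: "(\<phi>::'p set \<Rightarrow> real) \<in> spectrum_E \<Longrightarrow> \<phi> U = 1"
proof -
  assume sp: "\<phi> \<in> spectrum_E"
  then obtain X where X: "X \<in> C" "\<phi> X \<noteq> 0" unfolding spectrum_E_def by blast
  have "\<phi> (X \<inter> U) = \<phi> X * \<phi> U" using sp X UC unfolding spectrum_E_def by blast
  then have "\<phi> X = \<phi> X * \<phi> U" by simp
  then show ?thesis using X(2) by simp
qed

lemma sp_01: "(\<phi>::'p set \<Rightarrow> real) \<in> spectrum_E \<Longrightarrow> \<phi> X = 0 \<or> \<phi> X = 1"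
  unfolding spectrum_E_def by (cases "X \<in> C") auto

lemma sp_mult: "(\<phi>::'p set \<Rightarrow> real) \<in> spectrum_E \<Longrightarrow> X \<in> C \<Longrightarrow> Y \<in> C \<Longrightarrow> \<phi> (X \<inter> Y) = \<phi> X * \<phi> Y"
  unfolding spectrum_E_def by blast

lemma sp_out: "(\<phi>::'p set \<Rightarrow> real) \<in> spectrum_E \<Longrightarrow> X \<notin> C \<Longrightarrow> \<phi> X = 0"
  unfolding spectrum_E_def by blast

lemma compact_sp: "compact (spectrum_E :: ('p set \<Rightarrow> real) set)"
proof -
  define S where "S X = (if X \<in> C then {0,1} else {0::real})" for X
  define K where "K = PiE UNIV S"
  define T where "T = {\<phi>::'p set \<Rightarrow> real. \<phi> U = 1 \<and> \<phi> {} = 0 \<and>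
      (\<forall>X. \<forall>Y. (X \<in> C \<and> Y \<in> C) \<longrightarrow> \<phi> (X \<inter> Y) = \<phi> X * \<phi> Y)}"
  have "compactin (product_topology (\<lambda>_. euclidean) UNIV) K"
    unfolding K_def compactin_PiE S_def by (auto intro: finite_imp_compact)
  then have cK: "compact K" by (simp add: euclidean_product_topology)
  have cont: "continuous_on UNIV (\<lambda>\<phi>::'p set \<Rightarrow> real. \<phi> X)" for X by simp
  have c1: "closed {\<phi>::'p set \<Rightarrow> real. (X \<in> C \<and> Y \<in> C) \<longrightarrow> \<phi> (X \<inter> Y) = \<phi> X * \<phi> Y}" for X Y
  proof (cases "X \<in> C \<and> Y \<in> C")
    case True
    have "closed {\<phi>::'p set \<Rightarrow> real. \<phi> (X \<inter> Y) = \<phi> X * \<phi> Y}"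
      by (intro closed_Collect_eq cont continuous_intros)
    then show ?thesis using True by simp
  next
    case False
    then have "{\<phi>::'p set \<Rightarrow> real. (X \<in> C \<and> Y \<in> C) \<longrightarrow> \<phi> (X \<inter> Y) = \<phi> X * \<phi> Y} = UNIV" by auto
    then show ?thesis by simp
  qed
  have cT: "closed T" unfolding T_def
    by (intro closed_Collect_conj closed_Collect_all c1 closed_Collect_eq cont continuous_intros)
  have memK: "\<phi> \<in> K \<longleftrightarrow> (\<forall>X. \<phi> X \<in> S X)" for \<phi>
    unfolding K_def PiE_UNIV_domain by (simp add: Pi_iff)
  have eq: "spectrum_E = K \<inter> T"
  proof
    show "spectrum_E \<subseteq> K \<inter> T"
    proof
      fix \<phi> :: "'p set \<Rightarrow> real" assume sp: "\<phi> \<in> spectrum_E"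
      have "\<phi> X \<in> S X" for X
      proof (cases "X \<in> C")
        case True
        then show ?thesis using sp_01[OF sp, of X] unfolding S_def by auto
      next
        case False
        then show ?thesis using sp_out[OF sp False] unfolding S_def by auto
      qed
      then have "\<phi> \<in> K" using memK by blast
      moreover have "\<phi> {} = 0" using sp unfolding spectrum_E_def by blast
      then have "\<phi> \<in> T" unfolding T_def using sp_U[OF sp] sp_mult[OF sp] by blast
      ultimately show "\<phi> \<in> K \<inter> T" by blast
    qed
  next
    show "K \<inter> T \<subseteq> spectrum_E"
    proof
      fix \<phi> :: "'p set \<Rightarrow> real" assume h: "\<phi> \<in> K \<inter> T"
      then have hS: "\<phi> X \<in> S X" for X using memK by blast
      have a1: "\<forall>X\<in>C. \<phi> X \<in> {0, 1}" using hS unfolding S_def by (metis (full_types))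
      have a2: "\<forall>X. X \<notin> C \<longrightarrow> \<phi> X = 0" using hS unfolding S_def by (metis singletonD)
      have b: "\<phi> U = 1" "\<phi> {} = 0" "\<forall>X\<in>C. \<forall>Y\<in>C. \<phi> (X \<inter> Y) = \<phi> X * \<phi> Y"
        using h unfolding T_def by auto
      have b3: "\<exists>X\<in>C. \<phi> X \<noteq> 0" using b(1) UC by (intro bexI[of _ U]) simp_all
      show "\<phi> \<in> spectrum_E" unfolding spectrum_E_def
        using a1 a2 b(2) b(3) b3 by blast
    qed
  qed
  show ?thesis unfolding eq using cK cT by (rule compact_Int_closed)
qed

lemma unif_approx:
  fixes f :: "('p set \<Rightarrow> real) \<Rightarrow> complex"
  assumes f: "continuous_on spectrum_E f" and e: "e > 0"
  shows "\<exists>N. \<forall>\<phi>\<in>spectrum_E. \<forall>\<psi>\<in>spectrum_E. (\<forall>i<N. \<phi> (Z i) = \<psi> (Z i)) \<longrightarrow> cmod (f \<phi> - f \<psi>) < e"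
proof -
  let ?sp = "spectrum_E :: ('p set \<Rightarrow> real) set"
  have "\<forall>\<phi>\<in>?sp. \<exists>W. finite {X. W X \<noteq> UNIV} \<and> (\<forall>X. open (W X)) \<and> \<phi> \<in> PiE UNIV W \<and>
          (\<forall>\<psi>\<in>?sp. \<psi> \<in> PiE UNIV W \<longrightarrow> cmod (f \<psi> - f \<phi>) < e/2)"
  proof
    fix \<phi> assume sp: "\<phi> \<in> ?sp"
    have "f \<phi> \<in> ball (f \<phi>) (e/2)" using e by simp
    then have "\<exists>A. open A \<and> \<phi> \<in> A \<and> (\<forall>\<psi>\<in>?sp. \<psi> \<in> A \<longrightarrow> f \<psi> \<in> ball (f \<phi>) (e/2))"
      using f[unfolded continuous_on_topological, rule_format, OF sp, of "ball (f \<phi>) (e/2)"]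
      by simp
    then obtain A where A: "open A" "\<phi> \<in> A" "\<forall>\<psi>\<in>?sp. \<psi> \<in> A \<longrightarrow> f \<psi> \<in> ball (f \<phi>) (e/2)"
      by blast
    then have "openin (product_topology (\<lambda>_. euclidean) UNIV) A" by (simp add: open_fun_def)
    then have "\<exists>W. finite {i \<in> UNIV. W i \<noteq> topspace euclidean} \<and> (\<forall>i\<in>UNIV. openin euclidean (W i)) \<and>
        \<phi> \<in> PiE UNIV W \<and> PiE UNIV W \<subseteq> A"
      using A(2) unfolding openin_product_topology_alt by blast
    then obtain W where W: "finite {X. W X \<noteq> UNIV}" "\<forall>X. open (W X)"
        "\<phi> \<in> PiE UNIV W" "PiE UNIV W \<subseteq> A"
      by auto
    show "\<exists>W. finite {X. W X \<noteq> UNIV} \<and> (\<forall>X. open (W X)) \<and> \<phi> \<in> PiE UNIV W \<and>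
          (\<forall>\<psi>\<in>?sp. \<psi> \<in> PiE UNIV W \<longrightarrow> cmod (f \<psi> - f \<phi>) < e/2)"
      using W A(3) by (intro exI[of _ W]) (auto simp: dist_norm norm_minus_commute)
  qed
  from bchoice[OF this] obtain W where W0: "\<forall>\<phi>\<in>?sp. finite {X. W \<phi> X \<noteq> UNIV} \<and> (\<forall>X. open (W \<phi> X)) \<and> \<phi> \<in> PiE UNIV (W \<phi>) \<and>
          (\<forall>\<psi>\<in>?sp. \<psi> \<in> PiE UNIV (W \<phi>) \<longrightarrow> cmod (f \<psi> - f \<phi>) < e/2)" by (elim exE)
  have W: "\<And>\<phi>. \<phi> \<in> ?sp \<Longrightarrow> finite {X. W \<phi> X \<noteq> UNIV}"
      "\<And>\<phi> X. \<phi> \<in> ?sp \<Longrightarrow> open (W \<phi> X)" "\<And>\<phi>. \<phi> \<in> ?sp \<Longrightarrow> \<phi> \<in> PiE UNIV (W \<phi>)"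
      "\<And>\<phi> \<psi>. \<phi> \<in> ?sp \<Longrightarrow> \<psi> \<in> ?sp \<Longrightarrow> \<psi> \<in> PiE UNIV (W \<phi>) \<Longrightarrow> cmod (f \<psi> - f \<phi>) < e/2"
    using W0 by blast+
  have cov: "?sp \<subseteq> (\<Union>\<phi>\<in>?sp. PiE UNIV (W \<phi>))" using W(3) by blast
  have opn: "open (PiE UNIV (W \<phi>))" if "\<phi> \<in> ?sp" for \<phi>
    using W(1,2)[OF that] by (intro open_PiE) auto
  obtain D where D: "D \<subseteq> ?sp" "finite D" "?sp \<subseteq> (\<Union>\<phi>\<in>D. PiE UNIV (W \<phi>))"
    by (rule compactE_image[OF compact_sp opn cov])
  define Fin where "Fin = (\<Union>\<phi>\<in>D. {X. W \<phi> X \<noteq> UNIV}) \<inter> C"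
  have finF: "finite Fin" unfolding Fin_def
    using D(1,2) W(1) by (intro finite_Int disjI1 finite_UN_I) auto
  define idx where "idx X = (LEAST i. Z i = X)" for X
  have idx: "Z (idx X) = X" if XC: "X \<in> C" for X
  proof -
    obtain i where "Z i = X" using Z_surj[OF XC] by blast
    then show ?thesis unfolding idx_def by (rule LeastI)
  qed
  define N where "N = Suc (Max (insert 0 (idx ` Fin)))"
  have idxN: "idx X < N" if "X \<in> Fin" for X
  proof -
    have "idx X \<le> Max (insert 0 (idx ` Fin))" using finF that by (intro Max_ge) auto
    then show ?thesis unfolding N_def by simp
  qed
  show ?thesis
  proof (intro exI[of _ N] ballI impI)
    fix \<phi> \<psi> assume sp1: "\<phi> \<in> ?sp" and sp2: "\<psi> \<in> ?sp" and ag: "\<forall>i<N. \<phi> (Z i) = \<psi> (Z i)"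
    obtain \<phi>0 where p0: "\<phi>0 \<in> D" "\<phi> \<in> PiE UNIV (W \<phi>0)" using D(3) sp1 by blast
    have "\<psi> \<in> PiE UNIV (W \<phi>0)"
    proof -
      have "\<psi> X \<in> W \<phi>0 X" for X
      proof (cases "W \<phi>0 X = UNIV")
        case True then show ?thesis by simp
      next
        case False
        show ?thesis
        proof (cases "X \<in> C")
          case True
          then have "X \<in> Fin" unfolding Fin_def using False p0(1) by blast
          then have "\<phi> (Z (idx X)) = \<psi> (Z (idx X))" using ag idxN by blast
          then have "\<psi> X = \<phi> X" using idx[OF True] by simp
          then show ?thesis using p0(2) by (simp add: PiE_iff)
        next
          case False
          then have "\<psi> X = \<phi> X" using sp_out[OF sp1 False] sp_out[OF sp2 False] by simp
          then show ?thesis using p0(2) by (simp add: PiE_iff)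
        qed
      qed
      then show ?thesis by (simp add: PiE_iff)
    qed
    moreover have "\<phi>0 \<in> ?sp" using D(1) p0(1) by blast
    ultimately have "cmod (f \<psi> - f \<phi>0) < e/2" "cmod (f \<phi> - f \<phi>0) < e/2"
      using W(4)[of \<phi>0 \<psi>] W(4)[of \<phi>0 \<phi>] p0(2) sp1 sp2 by auto
    then show "cmod (f \<phi> - f \<psi>) < e"
      using norm_triangle_ineq4[of "f \<phi> - f \<phi>0" "f \<psi> - f \<phi>0"] by simp
  qed
qed

end

context ctx begin

lemma cs_bl: "bounded_linear (cscale J c)"
  unfolding cscale_def[abs_def]
  by (intro bounded_linear_add bounded_linear_scaleR_right bounded_linear_ident Jbl bounded_linear_compose[OF bounded_linear_scaleR_right Jbl])

lemma cs_add_v: "cscale J c (x + y) = cscale J c x + cscale J c y"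
  unfolding cscale_def by (simp add: J_add algebra_simps)
lemma cs_diff_v: "cscale J c (x - y) = cscale J c x - cscale J c y"
  unfolding cscale_def by (simp add: J_diff algebra_simps)
lemma cs_zero_v: "cscale J c 0 = 0"
  unfolding cscale_def by (simp add: J_zero)
lemma cs_sum_v: "cscale J c (sum g A) = (\<Sum>a\<in>A. cscale J c (g a))"
  using linear_sum[OF bounded_linear.linear[OF cs_bl]] by simp
lemma cs_add_c: "cscale J (a + b) x = cscale J a x + cscale J b x"
  unfolding cscale_def by (simp add: algebra_simps)
lemma cs_diff_c: "cscale J (a - b) x = cscale J a x - cscale J b x"
  unfolding cscale_def by (simp add: algebra_simps)
lemma cs_zero_c: "cscale J 0 x = 0" unfolding cscale_def by simp
lemma cs_sum_c: "cscale J (sum g A) x = (\<Sum>a\<in>A. cscale J (g a) x)"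
  by (induction A rule: infinite_finite_induct) (auto simp: cs_add_c cs_zero_c)
lemma cs_one: "cscale J 1 x = x" unfolding cscale_def by simp
lemma cs_real: "cscale J (complex_of_real r) x = r *\<^sub>R x" unfolding cscale_def by simp
lemma cs_minus1: "cscale J (-1) x = - x" unfolding cscale_def by simp
lemma cs_mult: "cscale J (a * b) x = cscale J a (cscale J b x)"
  unfolding cscale_def by (simp add: J_add J_scale JJ algebra_simps)
lemma cs_J: "cscale J c (J x) = J (cscale J c x)"
  unfolding cscale_def by (simp add: J_add J_scale JJ algebra_simps)

lemma cs_comm:
  assumes "bounded_linear T" "\<And>x. T (J x) = J (T x)"
  shows "T (cscale J c x) = cscale J c (T x)"
proof -
  interpret T: bounded_linear T by fact
  show ?thesis unfolding cscale_def by (simp add: T.add T.scaleR assms(2))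
qed

lemma cs_Q: "Q xs (cscale J c x) = cscale J c (Q xs x)"
  by (rule cs_comm[OF Q_bl Q_J])

lemma cs_inner: "inner (cscale J c x) y = inner x (cscale J (cnj c) y)"
  unfolding cscale_def by (simp add: inner_add_left inner_add_right inner_diff_right J_inner_swap)

lemma cs_norm: "norm (cscale J c x) = cmod c * norm x"
proof -
  have "(norm (cscale J c x))\<^sup>2 = (Re c)\<^sup>2 * (norm x)\<^sup>2 + (Im c)\<^sup>2 * (norm x)\<^sup>2"
    unfolding cscale_def power2_norm_eq_inner
    by (simp add: inner_add_left inner_add_right J_inner_self Jinner inner_commute[of "J x" x]
        power2_eq_square algebra_simps)
  also have "\<dots> = (cmod c * norm x)\<^sup>2"
    by (simp add: cmod_def power_mult_distrib algebra_simps)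
  finally show ?thesis by (simp add: power2_eq_iff_nonneg)
qed

lemma Q_proj_norm: "norm (Q xs x) \<le> norm x"
proof -
  have "(norm (Q xs x))\<^sup>2 = inner x (Q xs x)"
    by (simp add: power2_norm_eq_inner Q_adj Q_idem)
  also have "\<dots> \<le> norm x * norm (Q xs x)" by (rule order_trans[OF abs_ge_self Cauchy_Schwarz_ineq2])
  finally have h: "norm (Q xs x) * norm (Q xs x) \<le> norm x * norm (Q xs x)" by (simp add: power2_eq_square)
  show ?thesis
  proof (cases "norm (Q xs x) = 0")
    case True then show ?thesis by simp
  next
    case False then show ?thesis using h by (simp add: mult_le_cancel_right)
  qed
qed

lemma sU_inner: "inner x (\<sigma> U x) = (norm (\<sigma> U x))\<^sup>2"
  by (simp add: power2_norm_eq_inner sadj scomp)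

lemma sU_norm: "norm (\<sigma> U x) \<le> norm x"
  using Q_proj_norm[of "[]" x] by simp

lemma match_Cons: "match \<phi> (b#xs) \<longleftrightarrow> \<phi> (Z (length xs)) = (if b then 1 else 0) \<and> match \<phi> xs"
  unfolding match_def by (auto simp: nth_append less_Suc_eq)

lemma match_append: "match \<phi> (zs @ xs) \<Longrightarrow> match \<phi> xs"
  by (induction zs) (auto simp: match_Cons)

lemma match_agree: "match \<phi> xs \<Longrightarrow> match \<psi> xs \<Longrightarrow> i < length xs \<Longrightarrow> \<phi> (Z i) = \<psi> (Z i)"
  unfolding match_def by simp

fun pat :: "nat \<Rightarrow> ('p set \<Rightarrow> real) \<Rightarrow> bool list" where
  "pat 0 \<phi> = []"
| "pat (Suc n) \<phi> = (\<phi> (Z n) = 1) # pat n \<phi>"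

lemma length_pat[simp]: "length (pat n \<phi>) = n"
  by (induction n) auto

lemma match_pat: "\<phi> \<in> spectrum_E \<Longrightarrow> match \<phi> (pat n \<phi>)"
proof (induction n)
  case 0 then show ?case by (simp add: match_def)
next
  case (Suc n) then show ?case using sp_01[OF Suc.prems, of "Z n"] by (auto simp: match_Cons)
qed

lemma match_unique: "match \<phi> xs \<Longrightarrow> xs = pat (length xs) \<phi>"
  by (induction xs) (auto simp: match_Cons split: if_splits)

lemma match_iff_pat: "\<phi> \<in> spectrum_E \<Longrightarrow> xs \<in> L n \<Longrightarrow> match \<phi> xs \<longleftrightarrow> xs = pat n \<phi>"
proof -
  assume sp: "\<phi> \<in> spectrum_E" and xs: "xs \<in> L n"
  then have len: "length xs = n" unfolding L_def by simp
  show ?thesis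
  proof
    assume "match \<phi> xs" then show "xs = pat n \<phi>" using match_unique len by metis
  next
    assume "xs = pat n \<phi>" then show "match \<phi> xs" using match_pat[OF sp] by simp
  qed
qed

lemma ind_cont[continuous_intros]: "continuous_on S (ind_e X)"
  unfolding ind_e_def[abs_def]
  by (intro continuous_intros continuous_on_subset[OF continuous_on_product_coordinates]) auto

definition G :: "bool \<Rightarrow> 'p set \<Rightarrow> ('p set \<Rightarrow> real) \<Rightarrow> complex" where
  "G b W \<phi> = (if b then ind_e W \<phi> else ind_e U \<phi> - ind_e W \<phi>)"

fun chi :: "bool list \<Rightarrow> ('p set \<Rightarrow> real) \<Rightarrow> complex" where
  "chi [] \<phi> = ind_e U \<phi>"
| "chi (b#xs) \<phi> = G b (Z (length xs)) \<phi> * chi xs \<phi>"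

lemma G_cont: "continuous_on S (G b W)"
  unfolding G_def[abs_def] by (cases b) (auto intro!: continuous_intros)

lemma chi_cont: "continuous_on S (chi xs)"
proof (induction xs)
  case Nil
  have "chi [] = ind_e U" by (rule ext) simp
  then show ?case by (simp add: ind_cont)
next
  case (Cons b xs)
  have "chi (b#xs) = (\<lambda>\<phi>. G b (Z (length xs)) \<phi> * chi xs \<phi>)" by (rule ext) simp
  then show ?case using Cons G_cont by (auto intro!: continuous_intros)
qed

lemma chi_val: "\<phi> \<in> spectrum_E \<Longrightarrow> chi xs \<phi> = (if match \<phi> xs then 1 else 0)"
proof (induction xs)
  case Nil then show ?case by (simp add: ind_e_def sp_U match_def)
next
  case (Cons b xs)
  have "G b (Z (length xs)) \<phi> = (if \<phi> (Z (length xs)) = (if b then 1 else 0) then 1 else 0)"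
    using sp_01[OF Cons.prems, of "Z (length xs)"] sp_U[OF Cons.prems]
    unfolding G_def ind_e_def by auto
  then show ?case using Cons by (simp add: match_Cons)
qed

lemma chi_pat: "\<phi> \<in> spectrum_E \<Longrightarrow> xs \<in> L n \<Longrightarrow> chi xs \<phi> = (if xs = pat n \<phi> then 1 else 0)"
  using chi_val match_iff_pat by simp

lemma pat_L: "pat n \<phi> \<in> L n" unfolding L_def by simp

end

locale pictx = ctx J \<sigma> for J :: "'h::{real_inner,complete_space} \<Rightarrow> 'h" and \<sigma> :: "'p::monoid_mult set \<Rightarrow> 'h \<Rightarrow> 'h" +
  fixes \<pi> :: "(('p set \<Rightarrow> real) \<Rightarrow> complex) \<Rightarrow> 'h \<Rightarrow> 'h"
  assumes sr: "is_star_rep J \<pi>"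
    and pext: "\<forall>X\<in>constr_ideals. \<pi> (ind_e X) = \<sigma> X"
begin

abbreviation CE :: "(('p set \<Rightarrow> real) \<Rightarrow> complex) \<Rightarrow> bool" where
  "CE f \<equiv> continuous_on spectrum_E f"

lemma pbl: "CE f \<Longrightarrow> bounded_linear (\<pi> f)"
  using sr unfolding is_star_rep_def is_bop_def by blast
lemma pcong: "CE f \<Longrightarrow> CE g \<Longrightarrow> (\<And>\<phi>. \<phi> \<in> spectrum_E \<Longrightarrow> f \<phi> = g \<phi>) \<Longrightarrow> \<pi> f = \<pi> g"
  using sr unfolding is_star_rep_def by blast
lemma padd: "CE f \<Longrightarrow> CE g \<Longrightarrow> \<pi> (\<lambda>\<phi>. f \<phi> + g \<phi>) x = \<pi> f x + \<pi> g x"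
  using sr unfolding is_star_rep_def by metis
lemma pscale: "CE f \<Longrightarrow> \<pi> (\<lambda>\<phi>. c * f \<phi>) x = cscale J c (\<pi> f x)"
  using sr unfolding is_star_rep_def by metis
lemma pmult: "CE f \<Longrightarrow> CE g \<Longrightarrow> \<pi> (\<lambda>\<phi>. f \<phi> * g \<phi>) x = \<pi> f (\<pi> g x)"
  using sr unfolding is_star_rep_def by (metis comp_apply)
lemma padj: "CE f \<Longrightarrow> inner (\<pi> f x) y = inner x (\<pi> (\<lambda>\<phi>. cnj (f \<phi>)) y)"
  using sr unfolding is_star_rep_def is_adjoint_def by blast

lemma pzero: "\<pi> (\<lambda>\<phi>. 0) x = 0"
proof -
  have "\<pi> (\<lambda>\<phi>. 0 * (\<lambda>\<phi>. 0) \<phi>) x = cscale J 0 (\<pi> (\<lambda>\<phi>. 0) x)"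
    by (rule pscale) (intro continuous_intros)
  then show ?thesis by (simp add: cs_zero_c)
qed

lemma psum: "finite S \<Longrightarrow> (\<And>i. CE (g i)) \<Longrightarrow> \<pi> (\<lambda>\<phi>. \<Sum>i\<in>S. g i \<phi>) x = (\<Sum>i\<in>S. \<pi> (g i) x)"
proof (induction S rule: finite_induct)
  case empty then show ?case by (simp add: pzero)
next
  case (insert a S)
  have "\<pi> (\<lambda>\<phi>. \<Sum>i\<in>insert a S. g i \<phi>) x = \<pi> (\<lambda>\<phi>. g a \<phi> + (\<lambda>\<phi>. \<Sum>i\<in>S. g i \<phi>) \<phi>) x"
    using insert by simp
  also have "\<dots> = \<pi> (g a) x + \<pi> (\<lambda>\<phi>. \<Sum>i\<in>S. g i \<phi>) x"
    using insert.prems by (intro padd) (auto intro!: continuous_intros)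
  finally show ?case using insert by simp
qed

lemma pind: "X \<in> C \<Longrightarrow> \<pi> (ind_e X) = \<sigma> X" using pext by blast

lemma pG: "\<pi> (G b W) x = F b W x" if "W \<in> C"
proof (cases b)
  case True
  have "G b W = ind_e W" using True by (simp add: G_def[abs_def])
  then show ?thesis using True pind[OF that] by (simp add: F_def)
next
  case False
  have eq: "G b W = (\<lambda>\<phi>. ind_e U \<phi> + (\<lambda>\<phi>. (-1) * ind_e W \<phi>) \<phi>)" using False by (simp add: G_def[abs_def])
  have "\<pi> (G b W) x = \<pi> (\<lambda>\<phi>. ind_e U \<phi> + (\<lambda>\<phi>. (-1) * ind_e W \<phi>) \<phi>) x"
    by (simp only: eq)
  also have "\<dots> = \<pi> (ind_e U) x + \<pi> (\<lambda>\<phi>. (-1) * ind_e W \<phi>) x"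
    by (rule padd) (intro continuous_intros)+
  also have "\<dots> = \<sigma> U x - \<sigma> W x" using pscale[of "ind_e W" "-1" x] pind[OF that] pind[OF UC]
    by (simp add: ind_cont cs_minus1)
  finally show ?thesis using False by (simp add: F_def)
qed

lemma pchi: "\<pi> (chi xs) x = Q xs x"
proof (induction xs arbitrary: x)
  case Nil
  have "chi [] = ind_e U" by (rule ext) simp
  then show ?case by (simp add: pind)
next
  case (Cons b xs)
  have "chi (b#xs) = (\<lambda>\<phi>. G b (Z (length xs)) \<phi> * chi xs \<phi>)" by (rule ext) simp
  then have eq1: "\<pi> (chi (b#xs)) x = \<pi> (G b (Z (length xs))) (\<pi> (chi xs) x)"
    using pmult[OF G_cont chi_cont] by simp
  show ?case by (simp only: eq1 Cons.IH pG[OF ZC] Q.simps)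
qed

lemma bound:
  assumes f: "CE f" and M: "M \<ge> 0" and fM: "\<And>\<phi>. \<phi> \<in> spectrum_E \<Longrightarrow> cmod (f \<phi>) \<le> M"
  shows "norm (\<pi> f x) \<le> M * norm x"
proof -
  define h where "h (\<phi>::'p set \<Rightarrow> real) = complex_of_real (sqrt (M\<^sup>2 - (cmod (f \<phi>))\<^sup>2))" for \<phi>
  have h: "CE h" unfolding h_def[abs_def] using f by (intro continuous_intros)
  have fc: "CE (\<lambda>\<phi>. cnj (f \<phi>))" using f by (intro continuous_intros)
  have hc: "CE (\<lambda>\<phi>. cnj (h \<phi>))" using h by (intro continuous_intros)
  have n1: "(norm (\<pi> f x))\<^sup>2 = inner x (\<pi> (\<lambda>\<phi>. cnj (f \<phi>) * f \<phi>) x)"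
    using padj[OF f, of x "\<pi> f x"] pmult[OF fc f, of x] by (simp add: power2_norm_eq_inner)
  have n2: "(norm (\<pi> h x))\<^sup>2 = inner x (\<pi> (\<lambda>\<phi>. cnj (h \<phi>) * h \<phi>) x)"
    using padj[OF h, of x "\<pi> h x"] pmult[OF hc h, of x] by (simp add: power2_norm_eq_inner)
  have sumfun: "\<pi> (\<lambda>\<phi>. (\<lambda>\<phi>. cnj (f \<phi>) * f \<phi>) \<phi> + (\<lambda>\<phi>. cnj (h \<phi>) * h \<phi>) \<phi>) =
      \<pi> (\<lambda>\<phi>. complex_of_real (M\<^sup>2) * ind_e U \<phi>)"
  proof (rule pcong)
    show "CE (\<lambda>\<phi>. (\<lambda>\<phi>. cnj (f \<phi>) * f \<phi>) \<phi> + (\<lambda>\<phi>. cnj (h \<phi>) * h \<phi>) \<phi>)"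
      using f h by (intro continuous_intros)
    show "CE (\<lambda>\<phi>. complex_of_real (M\<^sup>2) * ind_e U \<phi>)" by (intro continuous_intros ind_cont)
    fix \<phi> :: "'p set \<Rightarrow> real" assume sp: "\<phi> \<in> spectrum_E"
    have le: "(cmod (f \<phi>))\<^sup>2 \<le> M\<^sup>2" using fM[OF sp] by (simp add: power_mono)
    have "cnj (f \<phi>) * f \<phi> = complex_of_real ((cmod (f \<phi>))\<^sup>2)"
      by (subst mult.commute) (rule complex_norm_square[symmetric])
    moreover have "cnj (h \<phi>) * h \<phi> = complex_of_real (M\<^sup>2 - (cmod (f \<phi>))\<^sup>2)"
      unfolding h_def using le by (simp flip: of_real_mult)
    moreover have "ind_e U \<phi> = 1" using sp_U[OF sp] by (simp add: ind_e_def)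
    ultimately show "(\<lambda>\<phi>. cnj (f \<phi>) * f \<phi>) \<phi> + (\<lambda>\<phi>. cnj (h \<phi>) * h \<phi>) \<phi> =
        complex_of_real (M\<^sup>2) * ind_e U \<phi>" by (simp flip: of_real_add)
  qed
  have "(norm (\<pi> f x))\<^sup>2 + (norm (\<pi> h x))\<^sup>2 =
      inner x (\<pi> (\<lambda>\<phi>. (\<lambda>\<phi>. cnj (f \<phi>) * f \<phi>) \<phi> + (\<lambda>\<phi>. cnj (h \<phi>) * h \<phi>) \<phi>) x)"
    unfolding n1 n2 padd[OF continuous_on_mult[OF fc f] continuous_on_mult[OF hc h]]
    by (simp add: inner_add_right)
  also have "\<dots> = inner x (M\<^sup>2 *\<^sub>R \<sigma> U x)"
    unfolding sumfun pscale[OF ind_cont] pind[OF UC] cs_real by simp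
  also have "\<dots> = M\<^sup>2 * (norm (\<sigma> U x))\<^sup>2" by (simp add: sU_inner)
  also have "\<dots> \<le> M\<^sup>2 * (norm x)\<^sup>2"
  proof -
    have "(norm (\<sigma> U x))\<^sup>2 \<le> (norm x)\<^sup>2" using sU_norm[of x] norm_ge_zero by (rule power_mono)
    then show ?thesis by (rule mult_left_mono) simp
  qed
  finally have "(norm (\<pi> f x))\<^sup>2 + (norm (\<pi> h x))\<^sup>2 \<le> M\<^sup>2 * (norm x)\<^sup>2" .
  then have "(norm (\<pi> f x))\<^sup>2 \<le> M\<^sup>2 * (norm x)\<^sup>2" using zero_le_power2[of "norm (\<pi> h x)"] by linarith
  then have "(norm (\<pi> f x))\<^sup>2 \<le> (M * norm x)\<^sup>2" unfolding power_mult_distrib .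
  moreover have "0 \<le> M * norm x" using M by simp
  ultimately show ?thesis by (rule power2_le_imp_le)
qed

lemma back_dir:
  assumes ur: UR and f: "CE f" and fz: "\<And>\<phi>. \<phi> \<in> spectrum_E_vee \<Longrightarrow> f \<phi> = 0"
  shows "\<pi> f x = 0"
proof -
  have main: "norm (\<pi> f x) \<le> \<epsilon> * norm x" if e: "\<epsilon> > 0" for \<epsilon>
  proof -
    obtain N where N: "\<And>\<phi> \<psi>. \<phi> \<in> spectrum_E \<Longrightarrow> \<psi> \<in> spectrum_E \<Longrightarrow> (\<forall>i<N. \<phi> (Z i) = \<psi> (Z i)) \<Longrightarrow>
        cmod (f \<phi> - f \<psi>) < \<epsilon>"
      using unif_approx[OF f e] by blast
    define A where "A = {xs \<in> L N. \<exists>y. Q xs y \<noteq> 0}"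
    define g where "g (\<phi>::'p set \<Rightarrow> real) = (\<Sum>xs\<in>A. f \<phi> * chi xs \<phi>)" for \<phi>
    define h where "h (\<phi>::'p set \<Rightarrow> real) = (\<Sum>xs\<in>L N - A. f \<phi> * chi xs \<phi>)" for \<phi>
    have finA: "finite A" unfolding A_def by simp
    have cg: "CE g" unfolding g_def[abs_def] using f by (intro continuous_intros chi_cont)
    have ch: "CE h" unfolding h_def[abs_def] using f by (intro continuous_intros chi_cont)
    have "\<pi> f = \<pi> (\<lambda>\<phi>. g \<phi> + h \<phi>)"
    proof (rule pcong[OF f])
      show "CE (\<lambda>\<phi>. g \<phi> + h \<phi>)" using cg ch by (intro continuous_intros)
      fix \<phi> :: "'p set \<Rightarrow> real" assume sp: "\<phi> \<in> spectrum_E"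
      have "g \<phi> + h \<phi> = (\<Sum>xs\<in>L N. f \<phi> * chi xs \<phi>)"
        unfolding g_def h_def
        by (subst sum.union_disjoint[symmetric]) (auto simp: A_def intro!: sum.cong)
      also have "\<dots> = (\<Sum>xs\<in>L N. if xs = pat N \<phi> then f \<phi> else 0)"
        by (intro sum.cong refl) (simp add: chi_pat[OF sp])
      also have "\<dots> = f \<phi>" using pat_L[of N \<phi>] by (simp add: sum.delta')
      finally show "f \<phi> = g \<phi> + h \<phi>" by simp
    qed
    then have "\<pi> f x = \<pi> g x + \<pi> h x" using padd[OF cg ch] by simp
    moreover have "\<pi> h x = 0"
    proof -
      have "\<pi> h x = (\<Sum>xs\<in>L N - A. \<pi> (\<lambda>\<phi>. f \<phi> * chi xs \<phi>) x)"
        unfolding h_def using f by (intro psum) (auto intro!: continuous_intros chi_cont)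
      also have "\<dots> = (\<Sum>xs\<in>L N - A. \<pi> f (Q xs x))"
        using pmult[OF f chi_cont] pchi by simp
      also have "\<dots> = 0"
      proof (intro sum.neutral ballI)
        fix xs assume "xs \<in> L N - A"
        then have "Q xs x = 0" unfolding A_def by auto
        then show "\<pi> f (Q xs x) = 0" using linear_0[OF bounded_linear.linear[OF pbl[OF f]]] by simp
      qed
      finally show ?thesis .
    qed
    moreover have "norm (\<pi> g x) \<le> \<epsilon> * norm x"
    proof (rule bound[OF cg])
      show "0 \<le> \<epsilon>" using e by simp
      fix \<phi> :: "'p set \<Rightarrow> real" assume sp: "\<phi> \<in> spectrum_E"
      have gv: "g \<phi> = (if pat N \<phi> \<in> A then f \<phi> else 0)"
      proof -
        have "g \<phi> = (\<Sum>xs\<in>A. if xs = pat N \<phi> then f \<phi> else 0)"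
          unfolding g_def by (intro sum.cong refl) (auto simp: chi_pat[OF sp] A_def)
        then show ?thesis using finA by (simp add: sum.delta')
      qed
      show "cmod (g \<phi>) \<le> \<epsilon>"
      proof (cases "pat N \<phi> \<in> A")
        case False then show ?thesis using gv e by simp
      next
        case True
        then obtain y where "Q (pat N \<phi>) y \<noteq> 0" unfolding A_def by blast
        then obtain \<psi> where psi: "\<psi> \<in> spectrum_E" "match \<psi> (pat N \<phi>)" "\<psi> \<in> spectrum_E_vee"
          using ext_char ur by blast
        have "\<forall>i<N. \<phi> (Z i) = \<psi> (Z i)"
          using match_agree[OF match_pat[OF sp] psi(2)] by simp
        then have "cmod (f \<phi> - f \<psi>) < \<epsilon>" using N sp psi(1) by blast
        then show ?thesis using gv True fz[OF psi(3)] by simp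
      qed
    qed
    ultimately show ?thesis by simp
  qed
  have "norm (\<pi> f x) \<le> 0"
  proof (rule field_le_epsilon)
    fix e :: real assume e: "e > 0"
    have "e / (norm x + 1) > 0" using e by (intro divide_pos_pos e add_nonneg_pos[OF norm_ge_zero zero_less_one])
    then have "norm (\<pi> f x) \<le> (e / (norm x + 1)) * norm x" by (rule main)
    also have "\<dots> \<le> (e / (norm x + 1)) * (norm x + 1)"
      using \<open>e / (norm x + 1) > 0\<close> by (intro mult_left_mono) auto
    also have "\<dots> = e" by (simp add: add_nonneg_pos[OF norm_ge_zero zero_less_one, THEN less_imp_neq, symmetric])
    finally show "norm (\<pi> f x) \<le> 0 + e" by simp
  qed
  then show ?thesis by simp
qed

end

context ctx begin

abbreviation CE' :: "(('p set \<Rightarrow> real) \<Rightarrow> complex) \<Rightarrow> bool" where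
  "CE' f \<equiv> continuous_on spectrum_E f"

definition ch :: "bool list \<Rightarrow> 'p set \<Rightarrow> real" where
  "ch xs = (SOME \<phi>. \<phi> \<in> spectrum_E \<and> match \<phi> xs)"

lemma ch: assumes "Q xs y \<noteq> 0" shows "ch xs \<in> spectrum_E" "match (ch xs) xs"
proof -
  have "\<exists>\<phi>. \<phi> \<in> spectrum_E \<and> match \<phi> xs" using ext_char[OF assms] by blast
  then have "ch xs \<in> spectrum_E \<and> match (ch xs) xs" unfolding ch_def by (rule someI_ex)
  then show "ch xs \<in> spectrum_E" "match (ch xs) xs" by auto
qed

lemma Q_app_zero: "(\<And>y. Q xs y = 0) \<Longrightarrow> Q (zs @ xs) x = 0"
proof (induction zs arbitrary: x)
  case Nil then show ?case by simp
next
  case (Cons b zs)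
  then show ?case using F_zero[OF ZC] by simp
qed

lemma atoms_orth:
  assumes "xs \<in> L n" "ys \<in> L n" "xs \<noteq> ys"
  shows "inner (cscale J a (Q xs x)) (cscale J b (Q ys x)) = 0"
proof -
  have "inner (cscale J a (Q xs x)) (cscale J b (Q ys x)) =
        inner (Q xs x) (cscale J (cnj a) (cscale J b (Q ys x)))" by (simp add: cs_inner)
  also have "\<dots> = inner (Q xs (Q xs x)) (cscale J (cnj a) (cscale J b (Q ys x)))" by (simp add: Q_idem)
  also have "\<dots> = inner (Q xs x) (Q xs (cscale J (cnj a) (cscale J b (Q ys x))))" by (rule Q_adj)
  also have "\<dots> = inner (Q xs x) (cscale J (cnj a) (cscale J b (Q xs (Q ys x))))" by (simp add: cs_Q)
  also have "\<dots> = 0" using Q_orth assms unfolding L_def by (simp add: cs_zero_v)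
  finally show ?thesis .
qed

lemma NB:
  assumes B: "B \<ge> 0" and d: "\<And>xs y. xs \<in> L n \<Longrightarrow> Q xs y \<noteq> 0 \<Longrightarrow> cmod (d xs) \<le> B"
  shows "norm (\<Sum>xs\<in>L n. cscale J (d xs) (Q xs x)) \<le> B * norm x"
proof -
  have "(norm (\<Sum>xs\<in>L n. cscale J (d xs) (Q xs x)))\<^sup>2 = (\<Sum>xs\<in>L n. (norm (cscale J (d xs) (Q xs x)))\<^sup>2)"
    by (rule norm_sum_Pythagorean) (auto simp: pairwise_def orthogonal_def atoms_orth)
  also have "\<dots> \<le> (\<Sum>xs\<in>L n. B\<^sup>2 * (norm (Q xs x))\<^sup>2)"
  proof (rule sum_mono)
    fix xs assume xs: "xs \<in> L n"
    show "(norm (cscale J (d xs) (Q xs x)))\<^sup>2 \<le> B\<^sup>2 * (norm (Q xs x))\<^sup>2"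
    proof (cases "Q xs x = 0")
      case True then show ?thesis by (simp add: cs_zero_v)
    next
      case False
      then have "cmod (d xs) \<le> B" using d xs by blast
      then have "(cmod (d xs))\<^sup>2 \<le> B\<^sup>2" by (simp add: power_mono)
      then show ?thesis by (simp add: cs_norm power_mult_distrib mult_right_mono)
    qed
  qed
  also have "\<dots> = B\<^sup>2 * (\<Sum>xs\<in>L n. inner x (Q xs x))"
    by (simp add: sum_distrib_left power2_norm_eq_inner Q_adj Q_idem)
  also have "\<dots> = B\<^sup>2 * (norm (\<sigma> U x))\<^sup>2"
    by (simp add: inner_sum_right[symmetric] Q_sum_L sU_inner)
  also have "\<dots> \<le> B\<^sup>2 * (norm x)\<^sup>2"
  proof -
    have "(norm (\<sigma> U x))\<^sup>2 \<le> (norm x)\<^sup>2" using sU_norm[of x] norm_ge_zero by (rule power_mono)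
    then show ?thesis by (rule mult_left_mono) simp
  qed
  finally have "(norm (\<Sum>xs\<in>L n. cscale J (d xs) (Q xs x)))\<^sup>2 \<le> (B * norm x)\<^sup>2"
    unfolding power_mult_distrib .
  moreover have "0 \<le> B * norm x" using B by simp
  ultimately show ?thesis by (rule power2_le_imp_le)
qed

definition pn :: "nat \<Rightarrow> (('p set \<Rightarrow> real) \<Rightarrow> complex) \<Rightarrow> 'h \<Rightarrow> 'h" where
  "pn n f x = (\<Sum>xs\<in>L n. cscale J (f (ch xs)) (Q xs x))"

lemma pn_refine: "pn n f x = (\<Sum>ys\<in>L (k+n). cscale J (f (ch (drop k ys))) (Q ys x))"
proof -
  have "(\<Sum>ys\<in>L (k+n). cscale J (f (ch (drop k ys))) (Q ys x)) =
      (\<Sum>zs\<in>L k. \<Sum>xs\<in>L n. cscale J (f (ch (drop k (zs @ xs)))) (Q (zs @ xs) x))"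
    by (rule sumL_append)
  also have "\<dots> = (\<Sum>zs\<in>L k. \<Sum>xs\<in>L n. cscale J (f (ch xs)) (Q (zs @ xs) x))"
    by (intro sum.cong refl) (simp add: L_def)
  also have "\<dots> = (\<Sum>xs\<in>L n. \<Sum>zs\<in>L k. cscale J (f (ch xs)) (Q (zs @ xs) x))"
    by (rule sum.swap)
  also have "\<dots> = (\<Sum>xs\<in>L n. cscale J (f (ch xs)) (Q xs x))"
    by (intro sum.cong refl) (simp add: cs_sum_v[symmetric] Q_refine)
  finally show ?thesis unfolding pn_def by simp
qed

lemma pn_diff: "pn (k+n) f x - pn n f x =
    (\<Sum>ys\<in>L (k+n). cscale J (f (ch ys) - f (ch (drop k ys))) (Q ys x))"
  unfolding pn_refine[of n f x k] by (simp add: pn_def cs_diff_c sum_subtractf)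

lemma Q_nz_drop: assumes "Q ys y \<noteq> 0" shows "\<exists>y'. Q (drop k ys) y' \<noteq> 0"
proof (rule ccontr)
  assume "\<not> (\<exists>y'. Q (drop k ys) y' \<noteq> 0)"
  then have "Q (take k ys @ drop k ys) y = 0" by (intro Q_app_zero) auto
  then show False using assms by simp
qed

lemma pn_cauchy_step:
  assumes f: "CE' f" and e: "e > 0"
  shows "\<exists>N. \<forall>n\<ge>N. \<forall>k. norm (pn (k+n) f x - pn n f x) \<le> e * norm x"
proof -
  obtain N where N: "\<And>\<phi> \<psi>. \<phi> \<in> spectrum_E \<Longrightarrow> \<psi> \<in> spectrum_E \<Longrightarrow> (\<forall>i<N. \<phi> (Z i) = \<psi> (Z i)) \<Longrightarrow>
      cmod (f \<phi> - f \<psi>) < e"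
    using unif_approx[OF f e] by blast
  show ?thesis
  proof (intro exI[of _ N] allI impI)
    fix n k assume nN: "N \<le> n"
    show "norm (pn (k+n) f x - pn n f x) \<le> e * norm x"
      unfolding pn_diff
    proof (rule NB)
      show "0 \<le> e" using e by simp
      fix ys y assume ys: "ys \<in> L (k+n)" and nz: "Q ys y \<noteq> 0"
      obtain y' where nz': "Q (drop k ys) y' \<noteq> 0" using Q_nz_drop[OF nz] by blast
      have m1: "match (ch ys) (drop k ys)" using ch(2)[OF nz] match_append[of _ "take k ys"] by simp
      have m2: "match (ch (drop k ys)) (drop k ys)" using ch(2)[OF nz'] .
      have len: "length (drop k ys) = n" using ys unfolding L_def by simp
      have "\<forall>i<N. ch ys (Z i) = ch (drop k ys) (Z i)"
        using match_agree[OF m1 m2] len nN by auto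
      then show "cmod (f (ch ys) - f (ch (drop k ys))) \<le> e"
        using N[OF ch(1)[OF nz] ch(1)[OF nz']] by (simp add: less_imp_le)
    qed
  qed
qed

lemma pn_cauchy: assumes f: "CE' f" shows "Cauchy (\<lambda>n. pn n f x)"
proof (rule CauchyI)
  fix e :: real assume e: "0 < e"
  define e' where "e' = e / (2 * (norm x + 1))"
  have npos: "norm x + 1 > 0" by (simp add: add_nonneg_pos)
  have e': "e' > 0" unfolding e'_def using e npos by simp
  obtain N where N: "\<And>n k. N \<le> n \<Longrightarrow> norm (pn (k+n) f x - pn n f x) \<le> e' * norm x"
    using pn_cauchy_step[OF f e'] by blast
  have small: "e' * norm x < e"
  proof -
    have "e' * norm x \<le> e' * (norm x + 1)" using e' by simp
    also have "\<dots> = e / 2"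
    proof -
      have "norm x + 1 \<noteq> 0" "2 * norm x + 2 \<noteq> 0" using npos by auto
      then show ?thesis unfolding e'_def by (simp add: field_simps)
    qed
    finally show ?thesis using e by simp
  qed
  show "\<exists>M. \<forall>m\<ge>M. \<forall>n\<ge>M. norm (pn m f x - pn n f x) < e"
  proof (intro exI[of _ N] allI impI)
    fix m n assume m: "N \<le> m" and n: "N \<le> n"
    show "norm (pn m f x - pn n f x) < e"
    proof (cases "n \<le> m")
      case True
      then have "m = (m - n) + n" by simp
      then have "norm (pn m f x - pn n f x) \<le> e' * norm x" using N[OF n, of "m - n"] by metis
      then show ?thesis using small by simp
    next
      case False
      then have "n = (n - m) + m" by simp
      then have "norm (pn n f x - pn m f x) \<le> e' * norm x" using N[OF m, of "n - m"] by metis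
      then show ?thesis using small by (simp add: norm_minus_commute)
    qed
  qed
qed

definition pi0 :: "(('p set \<Rightarrow> real) \<Rightarrow> complex) \<Rightarrow> 'h \<Rightarrow> 'h" where
  "pi0 f x = lim (\<lambda>n. pn n f x)"

lemma pi0_lim: "CE' f \<Longrightarrow> (\<lambda>n. pn n f x) \<longlonglongrightarrow> pi0 f x"
  unfolding pi0_def using pn_cauchy Cauchy_convergent_iff convergent_LIMSEQ_iff by blast

end

context ctx begin

lemma f_bounded: assumes "CE' f" shows "\<exists>M\<ge>0. \<forall>\<phi>\<in>spectrum_E. cmod (f \<phi>) \<le> M"
proof -
  have "compact (f ` spectrum_E)" by (rule compact_continuous_image[OF assms compact_sp])
  then have "bounded (f ` spectrum_E)" by (rule compact_imp_bounded)
  then obtain b where "b > 0" "\<forall>z\<in>f ` spectrum_E. norm z \<le> b" unfolding bounded_pos by blast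
  then show ?thesis by (intro exI[of _ b]) auto
qed

lemma pn_bound:
  assumes M: "M \<ge> 0" and fM: "\<And>\<phi>. \<phi> \<in> spectrum_E \<Longrightarrow> cmod (f \<phi>) \<le> M"
  shows "norm (pn n f x) \<le> M * norm x"
  unfolding pn_def by (rule NB[OF M]) (use fM ch(1) in blast)

lemma pn_add_x: "pn n f (a + b) = pn n f a + pn n f b"
  unfolding pn_def by (simp add: Q_add cs_add_v sum.distrib)
lemma pn_diff_x: "pn n f (a - b) = pn n f a - pn n f b"
  unfolding pn_def by (simp add: Q_diff cs_diff_v sum_subtractf)
lemma cs_scaleR: "cscale J c (r *\<^sub>R y) = r *\<^sub>R cscale J c y"
  using linear_scale[OF bounded_linear.linear[OF cs_bl]] by simp
lemma pn_scaleR_x: "pn n f (r *\<^sub>R a) = r *\<^sub>R pn n f a"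
  unfolding pn_def by (simp add: Q_scale cs_scaleR scaleR_sum_right)
lemma pn_J: "pn n f (J a) = J (pn n f a)"
  unfolding pn_def by (simp add: Q_J cs_J J_sum)
lemma pn_zero_x: "pn n f 0 = 0"
  unfolding pn_def by (simp add: Q_zero cs_zero_v)

lemma pn_cong: "(\<And>\<phi>. \<phi> \<in> spectrum_E \<Longrightarrow> f \<phi> = g \<phi>) \<Longrightarrow> pn n f x = pn n g x"
  unfolding pn_def
proof (intro sum.cong refl)
  fix xs assume h: "\<And>\<phi>. \<phi> \<in> spectrum_E \<Longrightarrow> f \<phi> = g \<phi>"
  show "cscale J (f (ch xs)) (Q xs x) = cscale J (g (ch xs)) (Q xs x)"
  proof (cases "Q xs x = 0")
    case True then show ?thesis by (simp add: cs_zero_v)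
  next
    case False then show ?thesis using h[OF ch(1)[OF False]] by simp
  qed
qed

lemma pn_add_f: "pn n (\<lambda>\<phi>. f \<phi> + g \<phi>) x = pn n f x + pn n g x"
  unfolding pn_def by (simp add: cs_add_c sum.distrib)

lemma pn_scale_f: "pn n (\<lambda>\<phi>. c * f \<phi>) x = cscale J c (pn n f x)"
  unfolding pn_def by (simp add: cs_mult cs_sum_v)

lemma pn_mult_f: "pn n (\<lambda>\<phi>. f \<phi> * g \<phi>) x = pn n f (pn n g x)"
proof -
  have inner_sum: "(\<Sum>b\<in>L n. cscale J (g (ch b)) (Q a (Q b x))) = cscale J (g (ch a)) (Q a x)"
    if a: "a \<in> L n" for a
  proof -
    have "(\<Sum>b\<in>L n. cscale J (g (ch b)) (Q a (Q b x))) =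
        (\<Sum>b\<in>L n. if b = a then cscale J (g (ch a)) (Q a x) else 0)"
    proof (intro sum.cong refl)
      fix b assume b: "b \<in> L n"
      show "cscale J (g (ch b)) (Q a (Q b x)) = (if b = a then cscale J (g (ch a)) (Q a x) else 0)"
      proof (cases "b = a")
        case True then show ?thesis by (simp add: Q_idem)
      next
        case False
        then have "Q a (Q b x) = 0" using Q_orth a b unfolding L_def by auto
        then show ?thesis using False by (simp add: cs_zero_v)
      qed
    qed
    also have "\<dots> = cscale J (g (ch a)) (Q a x)" using a by (simp add: sum.delta')
    finally show ?thesis .
  qed
  have "pn n f (pn n g x) = (\<Sum>a\<in>L n. cscale J (f (ch a)) (\<Sum>b\<in>L n. cscale J (g (ch b)) (Q a (Q b x))))"
    unfolding pn_def by (simp add: Q_sum cs_Q)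
  also have "\<dots> = (\<Sum>a\<in>L n. cscale J (f (ch a)) (cscale J (g (ch a)) (Q a x)))"
    by (intro sum.cong refl) (simp add: inner_sum)
  also have "\<dots> = pn n (\<lambda>\<phi>. f \<phi> * g \<phi>) x"
    unfolding pn_def by (simp add: cs_mult)
  finally show ?thesis by simp
qed

lemma pn_adj: "inner (pn n f x) y = inner x (pn n (\<lambda>\<phi>. cnj (f \<phi>)) y)"
  unfolding pn_def by (simp add: inner_sum_left inner_sum_right cs_inner Q_adj cs_Q)

lemma pn_ind: assumes X: "X \<in> C" and i: "Z i = X" and n: "i < n"
  shows "pn n (ind_e X) x = \<sigma> X x"
proof -
  have tm: "cscale J (ind_e X (ch xs)) (Q xs x) = \<sigma> X (Q xs x)" if xs: "xs \<in> L n" for xs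
  proof (cases "Q xs x = 0")
    case True then show ?thesis using X by (simp add: cs_zero_v s_zero)
  next
    case False
    have il: "i < length xs" using xs n unfolding L_def by simp
    have chv: "ch xs (Z i) = (if rev xs ! i then 1 else 0)"
      using ch(2)[OF False] il unfolding match_def by blast
    have fac: "F (rev xs ! i) (Z i) (Q xs x) = Q xs x" by (rule Q_factor[OF il])
    show ?thesis
    proof (cases "rev xs ! i")
      case True
      then have "\<sigma> X (Q xs x) = Q xs x" using fac i by (simp add: F_def)
      then show ?thesis using chv True i by (simp add: ind_e_def cs_one)
    next
      case False
      then have "\<sigma> X (Q xs x) = \<sigma> X (F False X (Q xs x))" using fac i by simp
      also have "\<dots> = 0" using X by (simp add: F_def s_diff scomp Int_absorb2)
      finally show ?thesis using chv False i by (simp add: ind_e_def cs_zero_c)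
    qed
  qed
  have "pn n (ind_e X) x = (\<Sum>xs\<in>L n. \<sigma> X (Q xs x))"
    unfolding pn_def by (intro sum.cong refl tm)
  also have "\<dots> = \<sigma> X (\<sigma> U x)" using X by (simp add: s_sum[symmetric] Q_sum_L)
  also have "\<dots> = \<sigma> X x" using X by (simp add: scomp)
  finally show ?thesis .
qed

lemma pi0_bound:
  assumes f: "CE' f" and M: "M \<ge> 0" and fM: "\<And>\<phi>. \<phi> \<in> spectrum_E \<Longrightarrow> cmod (f \<phi>) \<le> M"
  shows "norm (pi0 f x) \<le> M * norm x"
proof -
  have "(\<lambda>n. norm (pn n f x)) \<longlonglongrightarrow> norm (pi0 f x)" by (intro tendsto_norm pi0_lim f)
  then show ?thesis by (rule Lim_bounded[where M=0]) (intro allI impI pn_bound[OF M fM])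
qed

lemma pi0_bl: assumes f: "CE' f" shows "bounded_linear (pi0 f)"
proof -
  obtain M where M: "M \<ge> 0" "\<And>\<phi>. \<phi> \<in> spectrum_E \<Longrightarrow> cmod (f \<phi>) \<le> M" using f_bounded[OF f] by blast
  show ?thesis
  proof (rule bounded_linear_intro)
    fix a b
    have "(\<lambda>n. pn n f (a + b)) \<longlonglongrightarrow> pi0 f a + pi0 f b"
      unfolding pn_add_x by (intro tendsto_add pi0_lim f)
    then show "pi0 f (a + b) = pi0 f a + pi0 f b" using pi0_lim[OF f] LIMSEQ_unique by blast
  next
    fix r a
    have "(\<lambda>n. pn n f (r *\<^sub>R a)) \<longlonglongrightarrow> r *\<^sub>R pi0 f a"
      unfolding pn_scaleR_x by (intro tendsto_scaleR tendsto_const pi0_lim f)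
    then show "pi0 f (r *\<^sub>R a) = r *\<^sub>R pi0 f a" using pi0_lim[OF f] LIMSEQ_unique by blast
  next
    fix a show "norm (pi0 f a) \<le> norm a * M" using pi0_bound[OF f M] by (simp add: mult.commute)
  qed
qed

lemma pi0_J: assumes f: "CE' f" shows "pi0 f (J a) = J (pi0 f a)"
proof -
  have "(\<lambda>n. pn n f (J a)) \<longlonglongrightarrow> J (pi0 f a)"
    unfolding pn_J by (rule bounded_linear.tendsto[OF Jbl pi0_lim[OF f]])
  then show ?thesis using pi0_lim[OF f] LIMSEQ_unique by blast
qed

lemma pi0_cong: assumes h: "\<And>\<phi>. \<phi> \<in> spectrum_E \<Longrightarrow> f \<phi> = g \<phi>" shows "pi0 f = pi0 g"
proof (rule ext)
  fix x
  have "(\<lambda>n. pn n f x) = (\<lambda>n. pn n g x)" using pn_cong[OF h] by simp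
  then show "pi0 f x = pi0 g x" unfolding pi0_def by simp
qed

lemma pi0_add: assumes f: "CE' f" and g: "CE' g"
  shows "pi0 (\<lambda>\<phi>. f \<phi> + g \<phi>) = (\<lambda>x. pi0 f x + pi0 g x)"
proof (rule ext)
  fix x
  have fg: "CE' (\<lambda>\<phi>. f \<phi> + g \<phi>)" using f g by (intro continuous_intros)
  have "(\<lambda>n. pn n (\<lambda>\<phi>. f \<phi> + g \<phi>) x) \<longlonglongrightarrow> pi0 f x + pi0 g x"
    unfolding pn_add_f by (intro tendsto_add pi0_lim f g)
  then show "pi0 (\<lambda>\<phi>. f \<phi> + g \<phi>) x = pi0 f x + pi0 g x" using pi0_lim[OF fg] LIMSEQ_unique by blast
qed

lemma pi0_scale: assumes f: "CE' f"
  shows "pi0 (\<lambda>\<phi>. c * f \<phi>) = (\<lambda>x. cscale J c (pi0 f x))"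
proof (rule ext)
  fix x
  have fc: "CE' (\<lambda>\<phi>. c * f \<phi>)" using f by (intro continuous_intros)
  have "(\<lambda>n. pn n (\<lambda>\<phi>. c * f \<phi>) x) \<longlonglongrightarrow> cscale J c (pi0 f x)"
    unfolding pn_scale_f by (rule bounded_linear.tendsto[OF cs_bl pi0_lim[OF f]])
  then show "pi0 (\<lambda>\<phi>. c * f \<phi>) x = cscale J c (pi0 f x)" using pi0_lim[OF fc] LIMSEQ_unique by blast
qed

lemma pi0_add_pt: "CE' f \<Longrightarrow> CE' g \<Longrightarrow> pi0 (\<lambda>\<phi>. f \<phi> + g \<phi>) x = pi0 f x + pi0 g x"
  using pi0_add by metis
lemma pi0_scale_pt: "CE' f \<Longrightarrow> pi0 (\<lambda>\<phi>. c * f \<phi>) x = cscale J c (pi0 f x)"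
  using pi0_scale by metis

lemma pi0_mult: assumes f: "CE' f" and g: "CE' g"
  shows "pi0 (\<lambda>\<phi>. f \<phi> * g \<phi>) = pi0 f \<circ> pi0 g"
proof (rule ext)
  fix x
  have fg: "CE' (\<lambda>\<phi>. f \<phi> * g \<phi>)" using f g by (intro continuous_intros)
  obtain M where M: "M \<ge> 0" "\<And>\<phi>. \<phi> \<in> spectrum_E \<Longrightarrow> cmod (f \<phi>) \<le> M" using f_bounded[OF f] by blast
  let ?y = "pi0 g x"
  have split: "pn n f (pn n g x) = pn n f ?y + pn n f (pn n g x - ?y)" for n
    by (simp add: pn_diff_x)
  have t0: "(\<lambda>n. pn n g x - ?y) \<longlonglongrightarrow> 0"
    using pi0_lim[OF g, of x] by (simp add: LIM_zero)
  have t1: "(\<lambda>n. pn n f (pn n g x - ?y)) \<longlonglongrightarrow> 0"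
  proof (rule tendsto_0_le[OF t0])
    show "\<forall>\<^sub>F n in sequentially. norm (pn n f (pn n g x - ?y)) \<le> norm (pn n g x - ?y) * M"
      using pn_bound[OF M] by (simp add: mult.commute)
  qed
  have "(\<lambda>n. pn n f (pn n g x)) \<longlonglongrightarrow> pi0 f ?y + 0"
    unfolding split by (intro tendsto_add pi0_lim f t1)
  then have "(\<lambda>n. pn n (\<lambda>\<phi>. f \<phi> * g \<phi>) x) \<longlonglongrightarrow> pi0 f ?y"
    by (simp add: pn_mult_f)
  then show "pi0 (\<lambda>\<phi>. f \<phi> * g \<phi>) x = (pi0 f \<circ> pi0 g) x" using pi0_lim[OF fg] LIMSEQ_unique by auto
qed

lemma pi0_adj: assumes f: "CE' f"
  shows "is_adjoint (pi0 f) (pi0 (\<lambda>\<phi>. cnj (f \<phi>)))"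
  unfolding is_adjoint_def
proof (intro allI)
  fix x y
  have fc: "CE' (\<lambda>\<phi>. cnj (f \<phi>))" using f by (intro continuous_intros)
  have "(\<lambda>n. inner (pn n f x) y) \<longlonglongrightarrow> inner (pi0 f x) y"
    by (intro tendsto_inner pi0_lim f tendsto_const)
  moreover have "(\<lambda>n. inner (pn n f x) y) \<longlonglongrightarrow> inner x (pi0 (\<lambda>\<phi>. cnj (f \<phi>)) y)"
    unfolding pn_adj by (intro tendsto_inner pi0_lim fc tendsto_const)
  ultimately show "inner (pi0 f x) y = inner x (pi0 (\<lambda>\<phi>. cnj (f \<phi>)) y)" using LIMSEQ_unique by blast
qed

lemma pi0_ind: assumes X: "X \<in> C" shows "pi0 (ind_e X) = \<sigma> X"
proof (rule ext)
  fix x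
  obtain i where i: "Z i = X" using Z_surj[OF X] by blast
  have "(\<lambda>n. pn n (ind_e X) x) \<longlonglongrightarrow> \<sigma> X x"
  proof (rule tendsto_eventually)
    show "\<forall>\<^sub>F n in sequentially. pn n (ind_e X) x = \<sigma> X x"
      unfolding eventually_sequentially using pn_ind[OF X i] by (intro exI[of _ "Suc i"]) auto
  qed
  then show "pi0 (ind_e X) x = \<sigma> X x" using pi0_lim[OF ind_cont] LIMSEQ_unique by blast
qed

lemma pi0_star: "is_star_rep J pi0"
  unfolding is_star_rep_def
proof (intro conjI allI impI)
  fix f assume f: "CE' f"
  show "is_bop J (pi0 f)" unfolding is_bop_def using pi0_bl[OF f] pi0_J[OF f] by blast
  show "is_adjoint (pi0 f) (pi0 (\<lambda>\<phi>. cnj (f \<phi>)))" by (rule pi0_adj[OF f])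
next
  fix f g :: "('p set \<Rightarrow> real) \<Rightarrow> complex"
  assume "CE' f" "CE' g"
  then show "pi0 (\<lambda>\<phi>. f \<phi> + g \<phi>) = (\<lambda>x. pi0 f x + pi0 g x)" by (rule pi0_add)
next
  fix f g :: "('p set \<Rightarrow> real) \<Rightarrow> complex"
  assume "CE' f" "CE' g"
  then show "pi0 (\<lambda>\<phi>. f \<phi> * g \<phi>) = pi0 f \<circ> pi0 g" by (rule pi0_mult)
next
  fix f g :: "('p set \<Rightarrow> real) \<Rightarrow> complex"
  assume "CE' f" "CE' g" "\<forall>\<phi>\<in>spectrum_E. f \<phi> = g \<phi>"
  then show "pi0 f = pi0 g" using pi0_cong by blast
next
  fix f :: "('p set \<Rightarrow> real) \<Rightarrow> complex" and c
  assume "CE' f"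
  then show "pi0 (\<lambda>\<phi>. c * f \<phi>) = (\<lambda>x. cscale J c (pi0 f x))" by (rule pi0_scale)
qed

lemma forward:
  assumes sup: "supported_in J \<sigma> spectrum_E_vee"
  shows UR
  unfolding UR_def
proof (intro ballI impI ext)
  fix X Y x assume XC: "X \<in> C" and YC: "Y \<in> C" and XYC: "X \<union> Y \<in> C"
  have IXY: "X \<inter> Y \<in> C" using XC YC by simp
  define f where "f = (\<lambda>\<phi>. ind_e (X \<union> Y) \<phi> + (\<lambda>\<phi>. (\<lambda>\<phi>. (-1) * ind_e X \<phi>) \<phi> +
      (\<lambda>\<phi>. (\<lambda>\<phi>. (-1) * ind_e Y \<phi>) \<phi> + ind_e (X \<inter> Y) \<phi>) \<phi>) \<phi>)"
  have cf: "CE' f" unfolding f_def by (intro continuous_intros ind_cont)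
  have ext: "\<forall>X\<in>C. pi0 (ind_e X) = \<sigma> X" using pi0_ind by blast
  have vz: "\<forall>\<phi>\<in>spectrum_E_vee. f \<phi> = 0"
  proof
    fix \<phi> :: "'p set \<Rightarrow> real" assume "\<phi> \<in> spectrum_E_vee"
    then have "\<phi> (X \<union> Y) = \<phi> X + \<phi> Y - \<phi> (X \<inter> Y)" using XC YC XYC unfolding spectrum_E_vee_def by blast
    then have "complex_of_real (\<phi> (X \<union> Y)) = complex_of_real (\<phi> X + \<phi> Y - \<phi> (X \<inter> Y))" by simp
    then show "f \<phi> = 0" unfolding f_def ind_e_def by simp
  qed
  have "pi0 f = (\<lambda>x. 0)"
    using sup pi0_star ext cf vz unfolding supported_in_def by blast
  moreover have "pi0 f x = \<sigma> (X \<union> Y) x - \<sigma> X x - \<sigma> Y x + \<sigma> (X \<inter> Y) x"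
  proof -
    have c1: "CE' (\<lambda>\<phi>. (-1) * ind_e X \<phi>)" "CE' (\<lambda>\<phi>. (-1) * ind_e Y \<phi>)"
      "CE' (\<lambda>\<phi>. (-1) * ind_e Y \<phi> + ind_e (X \<inter> Y) \<phi>)"
      "CE' (\<lambda>\<phi>. (-1) * ind_e X \<phi> + ((-1) * ind_e Y \<phi> + ind_e (X \<inter> Y) \<phi>))"
      by (intro continuous_intros ind_cont)+
    have e1: "pi0 f x = pi0 (ind_e (X \<union> Y)) x +
        pi0 (\<lambda>\<phi>. (-1) * ind_e X \<phi> + ((-1) * ind_e Y \<phi> + ind_e (X \<inter> Y) \<phi>)) x"
      unfolding f_def by (rule pi0_add_pt[OF ind_cont c1(4)])
    have e2: "pi0 (\<lambda>\<phi>. (-1) * ind_e X \<phi> + ((-1) * ind_e Y \<phi> + ind_e (X \<inter> Y) \<phi>)) x =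
        pi0 (\<lambda>\<phi>. (-1) * ind_e X \<phi>) x + pi0 (\<lambda>\<phi>. (-1) * ind_e Y \<phi> + ind_e (X \<inter> Y) \<phi>) x"
      by (rule pi0_add_pt[OF c1(1) c1(3)])
    have e3: "pi0 (\<lambda>\<phi>. (-1) * ind_e Y \<phi> + ind_e (X \<inter> Y) \<phi>) x =
        pi0 (\<lambda>\<phi>. (-1) * ind_e Y \<phi>) x + pi0 (ind_e (X \<inter> Y)) x"
      by (rule pi0_add_pt[OF c1(2) ind_cont])
    have e4: "pi0 (\<lambda>\<phi>. (-1) * ind_e X \<phi>) x = - \<sigma> X x"
      using pi0_scale_pt[OF ind_cont, of "-1" X x] pi0_ind[OF XC] by (simp add: cs_minus1)
    have e5: "pi0 (\<lambda>\<phi>. (-1) * ind_e Y \<phi>) x = - \<sigma> Y x"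
      using pi0_scale_pt[OF ind_cont, of "-1" Y x] pi0_ind[OF YC] by (simp add: cs_minus1)
    show ?thesis unfolding e1 e2 e3 e4 e5 pi0_ind[OF XYC] pi0_ind[OF IXY] by simp
  qed
  ultimately show "\<sigma> (X \<union> Y) x = \<sigma> X x + \<sigma> Y x - \<sigma> (X \<inter> Y) x"
    by (simp add: algebra_simps)
qed

end

theorem mainTheorem3:
  fixes J :: "'h::{real_inner,complete_space} \<Rightarrow> 'h"
    and \<sigma> :: "'p::monoid_mult set \<Rightarrow> 'h \<Rightarrow> 'h"
  assumes "countable (UNIV :: 'p set)"
    and "left_cancellative TYPE('p)"
    and "complex_structure J"
    and "is_rep_E J \<sigma>"
  shows "supported_in J \<sigma> spectrum_E_vee \<longleftrightarrow>
    (\<forall>X\<in>constr_ideals. \<forall>Y\<in>constr_ideals. X \<union> Y \<in> constr_ideals \<longrightarrow>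
       \<sigma> (X \<union> Y) = (\<lambda>x. \<sigma> X x + \<sigma> Y x - \<sigma> (X \<inter> Y) x))"
proof -
  interpret ctx J \<sigma> using assms by unfold_locales
  show ?thesis
  proof
    assume "supported_in J \<sigma> spectrum_E_vee"
    then have UR by (rule forward)
    then show "\<forall>X\<in>constr_ideals. \<forall>Y\<in>constr_ideals. X \<union> Y \<in> constr_ideals \<longrightarrow>
       \<sigma> (X \<union> Y) = (\<lambda>x. \<sigma> X x + \<sigma> Y x - \<sigma> (X \<inter> Y) x)" unfolding UR_def .
  next
    assume R: "\<forall>X\<in>constr_ideals. \<forall>Y\<in>constr_ideals. X \<union> Y \<in> constr_ideals \<longrightarrow>
       \<sigma> (X \<union> Y) = (\<lambda>x. \<sigma> X x + \<sigma> Y x - \<sigma> (X \<inter> Y) x)"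
    then have ur: UR unfolding UR_def .
    show "supported_in J \<sigma> spectrum_E_vee"
      unfolding supported_in_def
    proof (intro allI impI)
      fix \<pi> :: "(('p set \<Rightarrow> real) \<Rightarrow> complex) \<Rightarrow> 'h \<Rightarrow> 'h" and f :: "('p set \<Rightarrow> real) \<Rightarrow> complex"
      assume h1: "is_star_rep J \<pi> \<and> (\<forall>X\<in>constr_ideals. \<pi> (ind_e X) = \<sigma> X)"
        and h2: "continuous_on spectrum_E f \<and> (\<forall>\<phi>\<in>spectrum_E_vee. f \<phi> = 0)"
      interpret pictx J \<sigma> \<pi> using h1 by unfold_locales auto
      show "\<pi> f = (\<lambda>x. 0)"
        using back_dir[OF ur] h2 by auto
    qed
  qed
qed

end
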